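(* Let $k,n\in\mathbb{N}$. For every $m\in\mathbb{N}$, every $W_0\in\mathbb{R}^{k\times m}$, every convex and $G$-Lipschitz loss $\ell:\mathbb{R}^k\to\mathbb{R}$, and every distribution $\mathcal{D}$ over the Euclidean unit ball of $\mathbb{R}^m$, $$\mathbb{E}_{S\sim\mathcal{D}^n}\big[L(\widehat{W}_* )-L(W^* )\big]=O\!\left(\frac{\sqrt k}{\sqrt n}\right),$$ where the constant in $O(\cdot)$ depends only on $G$.
   Context: Hypothesis set: $\{W\in\mathbb{R}^{k\times m}:\|W-W_0\|_F\le1\}$ with $\|\cdot\|_F$ the Frobenius norm. Population risk $L(W)=\mathbb{E}_{x\sim\mathcal{D}}[\ell(Wx)]$; for $S=\{x_1,\dots,x_n\}$ i.i.d. from $\mathcal{D}$, empirical risk $\widehat{L}(W)=\frac1n\sum_{i=1}^n\ell(Wx_i)$. $W^*$ is a minimizer of $L$ and $\widehat{W}_*$ a minimizer of $\widehat{L}$ over the hypothesis set. *)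

theory Defs
  imports "HOL-Probability.Probability"
begin

text \<open>A vector of R^d is a function nat => real; for the loss domain and for
  matrix-vector products we use vectors that vanish outside the index set {..<d}.
  A k x m matrix is a function nat => nat => real, vanishing outside {..<k} x {..<m}.
  Data points x in R^m are elements of the space of PiM {..<m} (lambda _. borel), i.e. extensional
  functions on {..<m}; only the coordinates x j for j < m are ever used.\<close>

definition is_matrix :: "nat \<Rightarrow> nat \<Rightarrow> (nat \<Rightarrow> nat \<Rightarrow> real) \<Rightarrow> bool" where
  "is_matrix k m W \<longleftrightarrow> (\<forall>i j. (k \<le> i \<or> m \<le> j) \<longrightarrow> W i j = 0)"

definition mat_vec :: "nat \<Rightarrow> nat \<Rightarrow> (nat \<Rightarrow> nat \<Rightarrow> real) \<Rightarrow> (nat \<Rightarrow> real) \<Rightarrow> (nat \<Rightarrow> real)" where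
  "mat_vec k m W x = (\<lambda>i. if i < k then (\<Sum>j<m. W i j * x j) else 0)"

definition frob_dist :: "nat \<Rightarrow> nat \<Rightarrow> (nat \<Rightarrow> nat \<Rightarrow> real) \<Rightarrow> (nat \<Rightarrow> nat \<Rightarrow> real) \<Rightarrow> real" where
  "frob_dist k m W V = sqrt (\<Sum>i<k. \<Sum>j<m. (W i j - V i j)\<^sup>2)"

definition hyp_set :: "nat \<Rightarrow> nat \<Rightarrow> (nat \<Rightarrow> nat \<Rightarrow> real) \<Rightarrow> (nat \<Rightarrow> nat \<Rightarrow> real) set" where
  "hyp_set k m W0 = {W. is_matrix k m W \<and> frob_dist k m W W0 \<le> 1}"

definition vec_space :: "nat \<Rightarrow> (nat \<Rightarrow> real) set" where
  "vec_space k = {y. \<forall>i. k \<le> i \<longrightarrow> y i = 0}"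

definition convex_loss :: "nat \<Rightarrow> ((nat \<Rightarrow> real) \<Rightarrow> real) \<Rightarrow> bool" where
  "convex_loss k l \<longleftrightarrow> (\<forall>y\<in>vec_space k. \<forall>z\<in>vec_space k. \<forall>t::real. 0 \<le> t \<and> t \<le> 1 \<longrightarrow>
      l (\<lambda>i. t * y i + (1 - t) * z i) \<le> t * l y + (1 - t) * l z)"

definition lipschitz_loss :: "nat \<Rightarrow> real \<Rightarrow> ((nat \<Rightarrow> real) \<Rightarrow> real) \<Rightarrow> bool" where
  "lipschitz_loss k G l \<longleftrightarrow> (\<forall>y\<in>vec_space k. \<forall>z\<in>vec_space k.
      \<bar>l y - l z\<bar> \<le> G * sqrt (\<Sum>i<k. (y i - z i)\<^sup>2))"

definition unit_ball_dist :: "nat \<Rightarrow> (nat \<Rightarrow> real) measure \<Rightarrow> bool" where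
  "unit_ball_dist m D \<longleftrightarrow> prob_space D \<and> sets D = sets (PiM {..<m} (\<lambda>_. borel))
      \<and> (AE x in D. (\<Sum>j<m. (x j)\<^sup>2) \<le> 1)"

definition pop_risk :: "nat \<Rightarrow> nat \<Rightarrow> (nat \<Rightarrow> real) measure \<Rightarrow> ((nat \<Rightarrow> real) \<Rightarrow> real)
    \<Rightarrow> (nat \<Rightarrow> nat \<Rightarrow> real) \<Rightarrow> real" where
  "pop_risk k m D l W = (\<integral>x. l (mat_vec k m W x) \<partial>D)"

definition emp_risk :: "nat \<Rightarrow> nat \<Rightarrow> nat \<Rightarrow> ((nat \<Rightarrow> real) \<Rightarrow> real) \<Rightarrow> (nat \<Rightarrow> nat \<Rightarrow> real)
    \<Rightarrow> (nat \<Rightarrow> nat \<Rightarrow> real) \<Rightarrow> real" where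
  "emp_risk k m n l S W = (\<Sum>i<n. l (mat_vec k m W (S i))) / real n"

definition sample_dist :: "nat \<Rightarrow> (nat \<Rightarrow> real) measure \<Rightarrow> (nat \<Rightarrow> nat \<Rightarrow> real) measure" where
  "sample_dist n D = PiM {..<n} (\<lambda>_. D)"

end

theory Submission
  imports Defs
begin



definition sgns :: "'a set \<Rightarrow> ('a \<Rightarrow> real) set" where
  "sgns I = PiE I (\<lambda>_. {-1, 1})"

definition Ex :: "'a set \<Rightarrow> (('a \<Rightarrow> real) \<Rightarrow> real) \<Rightarrow> real" where
  "Ex I F = (\<Sum>e\<in>sgns I. F e) / 2 ^ card I"

lemma finite_sgns[simp]: "finite I \<Longrightarrow> finite (sgns I)"
  unfolding sgns_def by (auto intro: finite_PiE)

lemma card_sgns: "finite I \<Longrightarrow> card (sgns I) = 2 ^ card I"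
  unfolding sgns_def by (simp add: card_PiE numeral_2_eq_2)

lemma sgns_val: "e \<in> sgns I \<Longrightarrow> x \<in> I \<Longrightarrow> e x = -1 \<or> e x = 1"
  unfolding sgns_def by auto

lemma sgns_abs: "e \<in> sgns I \<Longrightarrow> x \<in> I \<Longrightarrow> \<bar>e x\<bar> = 1"
  using sgns_val by fastforce

lemma Ex_const[simp]: "finite I \<Longrightarrow> Ex I (\<lambda>_. c) = c"
  unfolding Ex_def by (simp add: card_sgns)

lemma Ex_add: "Ex I (\<lambda>e. F e + H e) = Ex I F + Ex I H"
  unfolding Ex_def by (simp add: sum.distrib add_divide_distrib)

lemma Ex_diff: "Ex I (\<lambda>e. F e - H e) = Ex I F - Ex I H"
  unfolding Ex_def by (simp add: sum_subtractf diff_divide_distrib)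

lemma Ex_cmult: "Ex I (\<lambda>e. c * F e) = c * Ex I F"
  unfolding Ex_def by (simp add: sum_distrib_left)

lemma Ex_sum: "Ex I (\<lambda>e. \<Sum>x\<in>A. F x e) = (\<Sum>x\<in>A. Ex I (F x))"
  unfolding Ex_def by (simp add: sum.swap[of _ A] sum_divide_distrib)

lemma Ex_mono: "(\<And>e. e \<in> sgns I \<Longrightarrow> F e \<le> H e) \<Longrightarrow> Ex I F \<le> Ex I H"
  unfolding Ex_def by (intro divide_right_mono sum_mono) auto

lemma Ex_cong: "(\<And>e. e \<in> sgns I \<Longrightarrow> F e = H e) \<Longrightarrow> Ex I F = Ex I H"
  unfolding Ex_def by (intro arg_cong2[where f="(/)"] sum.cong) auto

lemma Ex_avg: "(Ex I F + Ex I H) / 2 = Ex I (\<lambda>e. (F e + H e) / 2)"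
  unfolding Ex_def by (simp add: sum.distrib add_divide_distrib sum_divide_distrib mult.commute)

lemma Ex_swap: "Ex I (\<lambda>e. Ex J (\<lambda>e'. F e e')) = Ex J (\<lambda>e'. Ex I (\<lambda>e. F e e'))"
  unfolding Ex_def by (simp add: sum_divide_distrib[symmetric] sum.swap[of _ "sgns I"])

lemma Ex_empty: "Ex {} F = F (\<lambda>_. undefined)"
  unfolding Ex_def sgns_def by simp

lemma Ex_insert:
  assumes "finite I" "a \<notin> I"
  shows "Ex (insert a I) F = (Ex I (\<lambda>e. F (e(a:=1))) + Ex I (\<lambda>e. F (e(a:=-1)))) / 2"
proof -
  have eq: "sgns (insert a I) = (\<lambda>(y, g). g(a := y)) ` ({-1,1} \<times> sgns I)"
    unfolding sgns_def by (rule PiE_insert_eq)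
  have inj: "inj_on (\<lambda>(y, g). g(a := y)) ({-1::real,1} \<times> sgns I)"
    unfolding sgns_def using assms(2) by (rule inj_combinator)
  have "(\<Sum>e\<in>sgns (insert a I). F e) = (\<Sum>p\<in>{-1::real,1} \<times> sgns I. F ((snd p)(a := fst p)))"
    unfolding eq by (subst sum.reindex[OF inj]) (auto simp: case_prod_beta intro!: sum.cong)
  also have "\<dots> = (\<Sum>y\<in>{-1::real,1}. \<Sum>e\<in>sgns I. F (e(a := y)))"
    by (subst sum.cartesian_product) (simp add: case_prod_beta)
  also have "\<dots> = (\<Sum>e\<in>sgns I. F (e(a := 1))) + (\<Sum>e\<in>sgns I. F (e(a := -1)))"
    by simp
  finally show ?thesis
    using assms unfolding Ex_def by (simp add: field_simps)
qed

lemma Ex_neg: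
  assumes "finite I"
  shows "Ex I (\<lambda>e. F (\<lambda>x\<in>I. - e x)) = Ex I F"
proof -
  let ?g = "\<lambda>e::'a\<Rightarrow>real. \<lambda>x\<in>I. - e x"
  have b: "bij_betw ?g (sgns I) (sgns I)"
  proof (rule bij_betwI[where g="?g"])
    show "?g \<in> sgns I \<rightarrow> sgns I" unfolding sgns_def by (auto simp: PiE_iff)
    show "?g \<in> sgns I \<rightarrow> sgns I" unfolding sgns_def by (auto simp: PiE_iff)
    fix e assume "e \<in> sgns I"
    then show "?g (?g e) = e" unfolding sgns_def by (auto simp: PiE_iff extensional_def)
    then show "?g (?g e) = e" .
  qed
  show ?thesis unfolding Ex_def
    by (subst sum.reindex_bij_betw[OF b, symmetric]) simp
qed

lemma Ex_union:
  assumes "finite J" "finite I" "I \<inter> J = {}"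
  shows "Ex (I \<union> J) F = Ex I (\<lambda>e1. Ex J (\<lambda>e2. F (\<lambda>x. if x \<in> I then e1 x else e2 x)))"
  using assms
proof (induction J arbitrary: F rule: finite_induct)
  case empty
  have "\<And>e1. e1 \<in> sgns I \<Longrightarrow> (\<lambda>x. if x \<in> I then e1 x else undefined) = e1"
    unfolding sgns_def by (auto simp: fun_eq_iff PiE_iff extensional_def)
  then have "Ex I (\<lambda>e1. F (\<lambda>x. if x \<in> I then e1 x else undefined)) = Ex I F"
    by (intro Ex_cong) simp
  then show ?case by (simp add: Ex_empty)
next
  case (insert a J)
  have aI: "a \<notin> I" "a \<notin> I \<union> J" using insert by auto
  have "Ex (I \<union> insert a J) F = Ex (insert a (I \<union> J)) F" by simp
  also have "\<dots> = (Ex (I \<union> J) (\<lambda>e. F (e(a:=1))) + Ex (I \<union> J) (\<lambda>e. F (e(a:=-1)))) / 2"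
    using insert aI by (intro Ex_insert) auto
  also have "\<dots> = (Ex I (\<lambda>e1. Ex J (\<lambda>e2. F ((\<lambda>x. if x \<in> I then e1 x else e2 x)(a:=1))))
      + Ex I (\<lambda>e1. Ex J (\<lambda>e2. F ((\<lambda>x. if x \<in> I then e1 x else e2 x)(a:=-1))))) / 2"
    using insert by simp
  also have "\<dots> = Ex I (\<lambda>e1. (Ex J (\<lambda>e2. F (\<lambda>x. if x \<in> I then e1 x else (e2(a:=1)) x))
      + Ex J (\<lambda>e2. F (\<lambda>x. if x \<in> I then e1 x else (e2(a:=-1)) x))) / 2)"
  proof -
    have eqs: "\<And>e1 e2 s. (\<lambda>x. if x \<in> I then e1 x else e2 x)(a:=s) = (\<lambda>x. if x \<in> I then e1 x else (e2(a:=s)) x)"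
      using aI by (auto simp: fun_eq_iff)
    show ?thesis
      unfolding eqs Ex_avg by simp
  qed
  also have "\<dots> = Ex I (\<lambda>e1. Ex (insert a J) (\<lambda>e2. F (\<lambda>x. if x \<in> I then e1 x else e2 x)))"
    using insert by (subst Ex_insert) auto
  finally show ?case .
qed




lemma Ex_CS:
  shows "(Ex I (\<lambda>e. f e * g e))\<^sup>2 \<le> Ex I (\<lambda>e. (f e)\<^sup>2) * Ex I (\<lambda>e. (g e)\<^sup>2)"
proof -
  have N: "(2::real) ^ card I > 0" by simp
  have "(\<Sum>e\<in>sgns I. f e * g e)\<^sup>2 \<le> (\<Sum>e\<in>sgns I. (f e)\<^sup>2) * (\<Sum>e\<in>sgns I. (g e)\<^sup>2)"
    by (rule Cauchy_Schwarz_ineq_sum)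
  then have "(\<Sum>e\<in>sgns I. f e * g e)\<^sup>2 / (2 ^ card I)\<^sup>2 \<le> (\<Sum>e\<in>sgns I. (f e)\<^sup>2) * (\<Sum>e\<in>sgns I. (g e)\<^sup>2) / (2 ^ card I)\<^sup>2"
    by (intro divide_right_mono) auto
  then show ?thesis unfolding Ex_def by (simp add: power_divide power2_eq_square)
qed

lemma Ex_jensen_sqrt:
  assumes "finite I"
  shows "Ex I f \<le> sqrt (Ex I (\<lambda>e. (f e)\<^sup>2))"
proof -
  have "(Ex I (\<lambda>e. f e * 1))\<^sup>2 \<le> Ex I (\<lambda>e. (f e)\<^sup>2) * Ex I (\<lambda>e. 1\<^sup>2)"
    by (rule Ex_CS)
  then have "(Ex I f)\<^sup>2 \<le> Ex I (\<lambda>e. (f e)\<^sup>2)" using assms by simp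
  then show ?thesis using real_le_rsqrt by blast
qed

lemma sum_upd_insert:
  assumes "finite J" "a \<notin> J"
  shows "(\<Sum>x\<in>insert a J. (e(a:=s)) x * u x) = s * u a + (\<Sum>x\<in>J. e x * u x)"
proof -
  have "(\<Sum>x\<in>J. (e(a:=s)) x * u x) = (\<Sum>x\<in>J. e x * u x)"
    using assms by (intro sum.cong) auto
  then show ?thesis using assms by simp
qed

lemma Ex_M2:
  assumes "finite J"
  shows "Ex J (\<lambda>e. (\<Sum>x\<in>J. e x * u x)\<^sup>2) = (\<Sum>x\<in>J. (u x)\<^sup>2)"
  using assms
proof (induction J rule: finite_induct)
  case empty
  then show ?case by (simp add: Ex_empty)
next
  case (insert a J)
  let ?X = "\<lambda>e. \<Sum>x\<in>J. e x * u x"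
  have "Ex (insert a J) (\<lambda>e. (\<Sum>x\<in>insert a J. e x * u x)\<^sup>2)
      = (Ex J (\<lambda>e. (u a + ?X e)\<^sup>2) + Ex J (\<lambda>e. (- u a + ?X e)\<^sup>2)) / 2"
    by (simp only: Ex_insert[OF insert(1,2)] sum_upd_insert[OF insert(1,2)]) simp
  also have "\<dots> = Ex J (\<lambda>e. (u a)\<^sup>2 + (?X e)\<^sup>2)"
    unfolding Ex_avg by (intro Ex_cong) (simp add: power2_eq_square field_simps)
  also have "\<dots> = (u a)\<^sup>2 + (\<Sum>x\<in>J. (u x)\<^sup>2)"
    using insert by (simp add: Ex_add)
  finally show ?case using insert by simp
qed

lemma Ex_M4:
  assumes "finite J"
  shows "Ex J (\<lambda>e. (\<Sum>x\<in>J. e x * u x) ^ 4) \<le> 3 * (\<Sum>x\<in>J. (u x)\<^sup>2)\<^sup>2"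
  using assms
proof (induction J rule: finite_induct)
  case empty
  then show ?case by (simp add: Ex_empty)
next
  case (insert a J)
  let ?X = "\<lambda>e. \<Sum>x\<in>J. e x * u x"
  let ?s = "\<Sum>x\<in>J. (u x)\<^sup>2"
  have "Ex (insert a J) (\<lambda>e. (\<Sum>x\<in>insert a J. e x * u x) ^ 4)
      = (Ex J (\<lambda>e. (u a + ?X e) ^ 4) + Ex J (\<lambda>e. (- u a + ?X e) ^ 4)) / 2"
    by (simp only: Ex_insert[OF insert(1,2)] sum_upd_insert[OF insert(1,2)]) simp
  also have "\<dots> = Ex J (\<lambda>e. (?X e) ^ 4 + 6 * (u a)\<^sup>2 * (?X e)\<^sup>2 + (u a) ^ 4)"
    unfolding Ex_avg by (intro Ex_cong) (simp add: power2_eq_square field_simps power4_eq_xxxx)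
  also have "\<dots> = Ex J (\<lambda>e. (?X e) ^ 4) + 6 * (u a)\<^sup>2 * ?s + (u a) ^ 4"
    using insert by (simp add: Ex_add Ex_cmult Ex_M2)
  also have "\<dots> \<le> 3 * ?s\<^sup>2 + 6 * (u a)\<^sup>2 * ?s + (u a) ^ 4"
    using insert by simp
  also have "\<dots> \<le> 3 * ((u a)\<^sup>2 + ?s)\<^sup>2"
  proof -
    have "0 \<le> ((u a)\<^sup>2)\<^sup>2" by simp
    then show ?thesis by (simp add: power2_eq_square power4_eq_xxxx algebra_simps)
  qed
  finally show ?case using insert by simp
qed

lemma sqrt_cube_lemma: "sqrt \<bar>y\<bar> * (\<bar>y\<bar> * sqrt \<bar>y\<bar>) = (y::real)\<^sup>2"
proof -
  have "sqrt \<bar>y\<bar> * sqrt \<bar>y\<bar> = \<bar>y\<bar>" by simp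
  then have "sqrt \<bar>y\<bar> * (\<bar>y\<bar> * sqrt \<bar>y\<bar>) = \<bar>y\<bar> * \<bar>y\<bar>" by (metis mult.left_commute)
  then show ?thesis by (simp add: power2_eq_square)
qed

lemma Ex_abs_nonneg: "0 \<le> Ex I (\<lambda>e. \<bar>f e\<bar>)"
  unfolding Ex_def by (intro divide_nonneg_pos sum_nonneg) auto

lemma khintchine:
  assumes "finite J"
  shows "sqrt (\<Sum>x\<in>J. (u x)\<^sup>2) \<le> 2 * Ex J (\<lambda>e. \<bar>\<Sum>x\<in>J. e x * u x\<bar>)"
proof -
  define X where "X = (\<lambda>e. \<Sum>x\<in>J. e x * u x)"
  define s where "s = Ex J (\<lambda>e. (X e)\<^sup>2)"
  define a where "a = Ex J (\<lambda>e. \<bar>X e\<bar>)"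
  define b where "b = Ex J (\<lambda>e. \<bar>X e\<bar> ^ 3)"
  define q where "q = Ex J (\<lambda>e. (X e) ^ 4)"
  have s_eq: "s = (\<Sum>x\<in>J. (u x)\<^sup>2)" unfolding s_def X_def using assms by (rule Ex_M2)
  have q_le: "q \<le> 3 * s\<^sup>2" unfolding q_def s_eq X_def using assms by (rule Ex_M4)
  have a0: "0 \<le> a" unfolding a_def by (rule Ex_abs_nonneg)
  have s0: "0 \<le> s" unfolding s_eq by (intro sum_nonneg) auto
  have b0: "0 \<le> b" unfolding b_def Ex_def by (intro divide_nonneg_pos sum_nonneg) auto
  have "s\<^sup>2 \<le> a * b"
  proof -
    have "(Ex J (\<lambda>e. sqrt \<bar>X e\<bar> * (\<bar>X e\<bar> * sqrt \<bar>X e\<bar>)))\<^sup>2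
        \<le> Ex J (\<lambda>e. (sqrt \<bar>X e\<bar>)\<^sup>2) * Ex J (\<lambda>e. (\<bar>X e\<bar> * sqrt \<bar>X e\<bar>)\<^sup>2)"
      by (rule Ex_CS)
    moreover have "(\<lambda>e. sqrt \<bar>X e\<bar> * (\<bar>X e\<bar> * sqrt \<bar>X e\<bar>)) = (\<lambda>e. (X e)\<^sup>2)"
      by (rule ext) (rule sqrt_cube_lemma)
    moreover have "(\<lambda>e. (sqrt \<bar>X e\<bar>)\<^sup>2) = (\<lambda>e. \<bar>X e\<bar>)" by auto
    moreover have "(\<lambda>e. (\<bar>X e\<bar> * sqrt \<bar>X e\<bar>)\<^sup>2) = (\<lambda>e. \<bar>X e\<bar> ^ 3)"
      by (rule ext) (metis sqrt_cube_lemma power2_eq_square power3_eq_cube mult.assoc mult.commute abs_mult_self_eq)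
    ultimately show ?thesis unfolding s_def a_def b_def by simp
  qed
  moreover have "b\<^sup>2 \<le> s * q"
  proof -
    have "(Ex J (\<lambda>e. \<bar>X e\<bar> * (X e)\<^sup>2))\<^sup>2 \<le> Ex J (\<lambda>e. \<bar>X e\<bar>\<^sup>2) * Ex J (\<lambda>e. ((X e)\<^sup>2)\<^sup>2)"
      by (rule Ex_CS)
    moreover have "(\<lambda>e. \<bar>X e\<bar> * (X e)\<^sup>2) = (\<lambda>e. \<bar>X e\<bar> ^ 3)"
      by (auto simp: fun_eq_iff power2_eq_square power3_eq_cube)
    moreover have "(\<lambda>e. ((X e)\<^sup>2)\<^sup>2) = (\<lambda>e. (X e) ^ 4)"
      by (auto simp: fun_eq_iff power2_eq_square power4_eq_xxxx)
    ultimately show ?thesis unfolding s_def b_def q_def by simp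
  qed
  ultimately have "s ^ 4 \<le> 3 * a\<^sup>2 * s ^ 3"
  proof -
    assume h1: "s\<^sup>2 \<le> a * b" and h2: "b\<^sup>2 \<le> s * q"
    have "(s\<^sup>2)\<^sup>2 \<le> (a * b)\<^sup>2" using h1 s0 by (intro power_mono) auto
    also have "\<dots> = a\<^sup>2 * b\<^sup>2" by (simp add: power_mult_distrib)
    also have "\<dots> \<le> a\<^sup>2 * (s * q)" using h2 by (intro mult_left_mono) auto
    also have "\<dots> \<le> a\<^sup>2 * (s * (3 * s\<^sup>2))" using q_le s0 by (intro mult_left_mono) auto
    finally show ?thesis by (simp add: power2_eq_square power4_eq_xxxx power3_eq_cube field_simps)
  qed
  then have "s \<le> 4 * a\<^sup>2"
  proof (cases "s = 0")
    case False
    then have "s > 0" using s0 by simp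
    have "s * s ^ 3 \<le> (3 * a\<^sup>2) * s ^ 3" using \<open>s ^ 4 \<le> _\<close> by (simp add: power4_eq_xxxx power3_eq_cube)
    then have "s \<le> 3 * a\<^sup>2" using \<open>s > 0\<close> by (simp add: mult_le_cancel_right)
    moreover have "0 \<le> a\<^sup>2" by simp
    ultimately show ?thesis by linarith
  qed simp
  then have "sqrt s \<le> sqrt (4 * a\<^sup>2)" by simp
  also have "\<dots> = 2 * a" using a0 by (simp add: real_sqrt_mult)
  finally show ?thesis unfolding s_eq a_def X_def .
qed




lemma sum_abs_bound:
  fixes e w :: "'a \<Rightarrow> real"
  assumes "finite J" "\<And>x. \<bar>w x\<bar> \<le> B"
  shows "\<bar>\<Sum>x\<in>J. e x * w x\<bar> \<le> (\<Sum>x\<in>J. \<bar>e x\<bar>) * B"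
proof -
  have "\<bar>\<Sum>x\<in>J. e x * w x\<bar> \<le> (\<Sum>x\<in>J. \<bar>e x * w x\<bar>)" by simp
  also have "\<dots> \<le> (\<Sum>x\<in>J. \<bar>e x\<bar> * B)"
    by (intro sum_mono) (simp add: abs_mult assms(2) mult_left_mono)
  finally show ?thesis by (simp add: sum_distrib_right)
qed

lemma contract_step:
  fixes A \<phi> :: "'t \<Rightarrow> real" and w :: "'t \<Rightarrow> 'a \<Rightarrow> real"
  assumes J: "finite J" and T: "T \<noteq> {}" and G: "0 \<le> G"
    and bA: "\<And>t. t \<in> T \<Longrightarrow> \<bar>A t\<bar> \<le> BA"
    and bw: "\<And>t x. t \<in> T \<Longrightarrow> \<bar>w t x\<bar> \<le> B"
    and bphi: "\<And>t. t \<in> T \<Longrightarrow> \<bar>\<phi> t\<bar> \<le> Bp"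
    and lip: "\<And>t t'. t \<in> T \<Longrightarrow> t' \<in> T \<Longrightarrow> \<bar>\<phi> t - \<phi> t'\<bar> \<le> G * sqrt (\<Sum>x\<in>J. (w t x - w t' x)\<^sup>2)"
  shows "(SUP t\<in>T. A t + \<phi> t) + (SUP t\<in>T. A t - \<phi> t)
      \<le> 2 * Ex J (\<lambda>e. SUP t\<in>T. A t + 2 * G * (\<Sum>x\<in>J. e x * w t x))"
proof -
  define Y where "Y = (\<lambda>e t. \<Sum>x\<in>J. e x * w t x)"
  define H where "H = (\<lambda>e. SUP t\<in>T. A t + 2 * G * Y e t)"
  define H' where "H' = (\<lambda>e. SUP t\<in>T. A t - 2 * G * Y e t)"
  have bY: "\<bar>Y e t\<bar> \<le> (\<Sum>x\<in>J. \<bar>e x\<bar>) * B" if "t \<in> T" for e t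
    unfolding Y_def using J bw[OF that] by (rule sum_abs_bound)
  have bdd: "bdd_above ((\<lambda>t. A t + c * Y e t) ` T)" for c e
  proof (rule bdd_aboveI2)
    fix t assume t: "t \<in> T"
    have "\<bar>c * Y e t\<bar> \<le> \<bar>c\<bar> * ((\<Sum>x\<in>J. \<bar>e x\<bar>) * B)"
      unfolding abs_mult by (intro mult_left_mono bY t) auto
    then show "A t + c * Y e t \<le> BA + \<bar>c\<bar> * ((\<Sum>x\<in>J. \<bar>e x\<bar>) * B)"
      using bA[OF t] by linarith
  qed
  have upH: "A t + 2 * G * Y e t \<le> H e" if "t \<in> T" for t e
    unfolding H_def by (rule cSUP_upper[OF that bdd])
  have upH': "A t - 2 * G * Y e t \<le> H' e" if "t \<in> T" for t e
  proof -
    have "A t + (- 2 * G) * Y e t \<le> (SUP t\<in>T. A t + (- 2 * G) * Y e t)"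
      by (rule cSUP_upper[OF that bdd])
    then show ?thesis unfolding H'_def by simp
  qed
  have neg: "Ex J H' = Ex J H"
  proof -
    have "\<And>e. Y (\<lambda>x\<in>J. - e x) = (\<lambda>t. - Y e t)"
      unfolding Y_def by (auto simp: fun_eq_iff sum_negf[symmetric] intro!: sum.cong)
    then have "\<And>e. H (\<lambda>x\<in>J. - e x) = H' e"
      unfolding H_def H'_def by simp
    then show ?thesis using Ex_neg[OF J, of H] by simp
  qed
  have key: "(A t + \<phi> t) + (A t' - \<phi> t') \<le> 2 * Ex J H" if t: "t \<in> T" and t': "t' \<in> T" for t t'
  proof -
    have "(A t + \<phi> t) + (A t' - \<phi> t') \<le> A t + A t' + G * sqrt (\<Sum>x\<in>J. (w t x - w t' x)\<^sup>2)"
      using lip[OF t t'] by linarith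
    also have "\<dots> \<le> A t + A t' + G * (2 * Ex J (\<lambda>e. \<bar>\<Sum>x\<in>J. e x * (w t x - w t' x)\<bar>))"
      using khintchine[OF J, of "\<lambda>x. w t x - w t' x"] G by (intro add_left_mono mult_left_mono) auto
    also have "\<dots> = Ex J (\<lambda>e. A t + A t' + 2 * G * \<bar>Y e t - Y e t'\<bar>)"
    proof -
      have "\<And>e. (\<Sum>x\<in>J. e x * (w t x - w t' x)) = Y e t - Y e t'"
        unfolding Y_def by (simp add: right_diff_distrib sum_subtractf)
      then show ?thesis using J by (simp add: Ex_add Ex_cmult)
    qed
    also have "\<dots> \<le> Ex J (\<lambda>e. H e + H' e)"
    proof (rule Ex_mono)
      fix e
      show "A t + A t' + 2 * G * \<bar>Y e t - Y e t'\<bar> \<le> H e + H' e"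
      proof (cases "Y e t' \<le> Y e t")
        case True
        then show ?thesis using upH[OF t, of e] upH'[OF t', of e] by (simp add: abs_if algebra_simps)
      next
        case False
        then show ?thesis using upH[OF t', of e] upH'[OF t, of e] by (simp add: abs_if algebra_simps)
      qed
    qed
    also have "\<dots> = 2 * Ex J H" by (simp add: Ex_add neg)
    finally show ?thesis .
  qed
  have "(SUP t\<in>T. A t + \<phi> t) \<le> 2 * Ex J H - (A t' - \<phi> t')" if t': "t' \<in> T" for t'
    using key[OF _ t'] by (intro cSUP_least T) (simp add: algebra_simps)
  then have "(SUP t'\<in>T. A t' - \<phi> t') \<le> 2 * Ex J H - (SUP t\<in>T. A t + \<phi> t)"
    by (intro cSUP_least T) (simp add: algebra_simps)
  then show ?thesis unfolding H_def Y_def by simp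
qed




lemma sum_single_times: "(\<Sum>x\<in>{a}\<times>K. f x) = (\<Sum>j\<in>K. f (a, j))"
proof -
  have "{a}\<times>K = (\<lambda>j. (a,j)) ` K" by auto
  moreover have "inj_on (\<lambda>j. (a,j)) K" by (auto simp: inj_on_def)
  ultimately show ?thesis by (simp add: sum.reindex)
qed

lemma contract:
  fixes \<phi> :: "nat \<Rightarrow> 't \<Rightarrow> real" and v :: "nat \<Rightarrow> 't \<Rightarrow> nat \<Rightarrow> real" and A :: "'t \<Rightarrow> real"
  assumes T: "T \<noteq> {}" and G: "0 \<le> G"
    and bphi: "\<And>i t. i < n \<Longrightarrow> t \<in> T \<Longrightarrow> \<bar>\<phi> i t\<bar> \<le> B"
    and bv: "\<And>i t j. i < n \<Longrightarrow> t \<in> T \<Longrightarrow> \<bar>v i t j\<bar> \<le> B"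
    and lip: "\<And>i t t'. i < n \<Longrightarrow> t \<in> T \<Longrightarrow> t' \<in> T \<Longrightarrow>
        \<bar>\<phi> i t - \<phi> i t'\<bar> \<le> G * sqrt (\<Sum>j<k. (v i t j - v i t' j)\<^sup>2)"
    and bA: "\<And>t. t \<in> T \<Longrightarrow> \<bar>A t\<bar> \<le> BA"
  shows "Ex {..<n} (\<lambda>\<sigma>. SUP t\<in>T. A t + (\<Sum>i<n. \<sigma> i * \<phi> i t))
     \<le> Ex ({..<n} \<times> {..<k}) (\<lambda>e. SUP t\<in>T. A t + 2 * G * (\<Sum>i<n. \<Sum>j<k. e (i,j) * v i t j))"
  using bphi bv lip bA
proof (induction n arbitrary: A BA)
  case 0
  then show ?case by (simp add: Ex_empty)
next
  case (Suc n)
  let ?I = "{..<n} \<times> {..<k}"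
  let ?J = "{n} \<times> {..<k}"
  define Ae where "Ae = (\<lambda>e t. A t + 2 * G * (\<Sum>i<n. \<Sum>j<k. e (i,j) * v i t j))"
  define w where "w = (\<lambda>t (x::nat\<times>nat). v n t (snd x))"
  have IH: "Ex {..<n} (\<lambda>\<sigma>. SUP t\<in>T. (A t + s * \<phi> n t) + (\<Sum>i<n. \<sigma> i * \<phi> i t))
     \<le> Ex ?I (\<lambda>e. SUP t\<in>T. (A t + s * \<phi> n t) + 2 * G * (\<Sum>i<n. \<Sum>j<k. e (i,j) * v i t j))"
    if s: "s = 1 \<or> s = -1" for s
  proof (rule Suc.IH[where BA="BA + B"])
    fix t assume t: "t \<in> T"
    have "\<bar>s * \<phi> n t\<bar> \<le> B" using s Suc.prems(1)[of n t] t by auto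
    then show "\<bar>A t + s * \<phi> n t\<bar> \<le> BA + B" using Suc.prems(4)[OF t] by linarith
  qed (use Suc.prems in auto)
  have Fs: "(\<lambda>\<sigma>. SUP t\<in>T. A t + (\<Sum>i<Suc n. (\<sigma>(n:=s)) i * \<phi> i t))
      = (\<lambda>\<sigma>. SUP t\<in>T. (A t + s * \<phi> n t) + (\<Sum>i<n. \<sigma> i * \<phi> i t))" for s
  proof -
    have "(\<Sum>i<n. (\<sigma>(n:=s)) i * \<phi> i t) = (\<Sum>i<n. \<sigma> i * \<phi> i t)" for \<sigma> t
      by (intro sum.cong) auto
    then show ?thesis by (simp add: algebra_simps)
  qed
  have "Ex {..<Suc n} (\<lambda>\<sigma>. SUP t\<in>T. A t + (\<Sum>i<Suc n. \<sigma> i * \<phi> i t))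
      = (Ex {..<n} (\<lambda>\<sigma>. SUP t\<in>T. (A t + 1 * \<phi> n t) + (\<Sum>i<n. \<sigma> i * \<phi> i t))
       + Ex {..<n} (\<lambda>\<sigma>. SUP t\<in>T. (A t + (-1) * \<phi> n t) + (\<Sum>i<n. \<sigma> i * \<phi> i t))) / 2"
    unfolding lessThan_Suc by (subst Ex_insert) (simp_all add: Fs[unfolded lessThan_Suc] algebra_simps)
  also have "\<dots> \<le> (Ex ?I (\<lambda>e. SUP t\<in>T. Ae e t + \<phi> n t) + Ex ?I (\<lambda>e. SUP t\<in>T. Ae e t - \<phi> n t)) / 2"
    using IH[of 1] IH[of "-1"] unfolding Ae_def by (simp add: algebra_simps)
  also have "\<dots> = Ex ?I (\<lambda>e. ((SUP t\<in>T. Ae e t + \<phi> n t) + (SUP t\<in>T. Ae e t - \<phi> n t)) / 2)"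
    by (rule Ex_avg)
  also have "\<dots> \<le> Ex ?I (\<lambda>e. Ex ?J (\<lambda>d. SUP t\<in>T. Ae e t + 2 * G * (\<Sum>x\<in>?J. d x * w t x)))"
  proof (rule Ex_mono)
    fix e
    have "(SUP t\<in>T. Ae e t + \<phi> n t) + (SUP t\<in>T. Ae e t - \<phi> n t)
        \<le> 2 * Ex ?J (\<lambda>d. SUP t\<in>T. Ae e t + 2 * G * (\<Sum>x\<in>?J. d x * w t x))"
    proof (rule contract_step[OF _ T G])
      show "finite ?J" by simp
      fix t assume t: "t \<in> T"
      show "\<bar>w t x\<bar> \<le> B" for x unfolding w_def using Suc.prems(2) t by auto
      show "\<bar>\<phi> n t\<bar> \<le> B" using Suc.prems(1) t by auto
      have "\<bar>\<Sum>i<n. \<Sum>j<k. e (i,j) * v i t j\<bar> \<le> (\<Sum>i<n. \<Sum>j<k. \<bar>e (i,j)\<bar> * B)"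
      proof -
        have "\<bar>\<Sum>i<n. \<Sum>j<k. e (i,j) * v i t j\<bar> \<le> (\<Sum>i<n. \<bar>\<Sum>j<k. e (i,j) * v i t j\<bar>)" by simp
        also have "\<dots> \<le> (\<Sum>i<n. \<Sum>j<k. \<bar>e (i,j)\<bar> * B)"
        proof (rule sum_mono)
          fix i assume i: "i \<in> {..<n}"
          have "\<bar>\<Sum>j<k. e (i,j) * v i t j\<bar> \<le> (\<Sum>j<k. \<bar>e (i,j)\<bar>) * B"
            by (rule sum_abs_bound) (use i t Suc.prems(2) in auto)
          then show "\<bar>\<Sum>j<k. e (i,j) * v i t j\<bar> \<le> (\<Sum>j<k. \<bar>e (i,j)\<bar> * B)"
            by (simp add: sum_distrib_right)
        qed
        finally show ?thesis .
      qed
      then have "\<bar>2 * G * (\<Sum>i<n. \<Sum>j<k. e (i,j) * v i t j)\<bar> \<le> 2 * G * (\<Sum>i<n. \<Sum>j<k. \<bar>e (i,j)\<bar> * B)"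
        using G by (simp add: abs_mult mult_left_mono)
      then show "\<bar>Ae e t\<bar> \<le> BA + 2 * G * (\<Sum>i<n. \<Sum>j<k. \<bar>e (i,j)\<bar> * B)"
        unfolding Ae_def using Suc.prems(4)[OF t] by linarith
    next
      fix t t' assume t: "t \<in> T" and t': "t' \<in> T"
      have "(\<Sum>x\<in>?J. (w t x - w t' x)\<^sup>2) = (\<Sum>j<k. (v n t j - v n t' j)\<^sup>2)"
        unfolding w_def sum_single_times by simp
      then show "\<bar>\<phi> n t - \<phi> n t'\<bar> \<le> G * sqrt (\<Sum>x\<in>?J. (w t x - w t' x)\<^sup>2)"
        using Suc.prems(3)[of n t t'] t t' by simp
    qed
    then show "((SUP t\<in>T. Ae e t + \<phi> n t) + (SUP t\<in>T. Ae e t - \<phi> n t)) / 2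
        \<le> Ex ?J (\<lambda>d. SUP t\<in>T. Ae e t + 2 * G * (\<Sum>x\<in>?J. d x * w t x))" by simp
  qed
  also have "\<dots> = Ex (?I \<union> ?J) (\<lambda>e. SUP t\<in>T. A t + 2 * G * (\<Sum>i<Suc n. \<Sum>j<k. e (i,j) * v i t j))"
  proof -
    have eq: "(\<Sum>i<Suc n. \<Sum>j<k. (if (i,j) \<in> ?I then e1 (i,j) else e2 (i,j)) * v i t j)
        = (\<Sum>i<n. \<Sum>j<k. e1 (i,j) * v i t j) + (\<Sum>x\<in>?J. e2 x * w t x)" for e1 e2 t
    proof -
      have "(\<Sum>i<n. \<Sum>j<k. (if (i,j) \<in> ?I then e1 (i,j) else e2 (i,j)) * v i t j)
          = (\<Sum>i<n. \<Sum>j<k. e1 (i,j) * v i t j)"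
        by (intro sum.cong) auto
      moreover have "(\<Sum>j<k. (if (n,j) \<in> ?I then e1 (n,j) else e2 (n,j)) * v n t j) = (\<Sum>x\<in>?J. e2 x * w t x)"
        unfolding w_def sum_single_times by simp
      ultimately show ?thesis by simp
    qed
    show ?thesis
      by (subst Ex_union) (auto simp: eq Ae_def algebra_simps w_def sum_single_times)
  qed
  also have "?I \<union> ?J = {..<Suc n} \<times> {..<k}" by auto
  finally show ?case .
qed




definition vnorm :: "nat \<Rightarrow> (nat \<Rightarrow> real) \<Rightarrow> real" where
  "vnorm m x = sqrt (\<Sum>j<m. (x j)\<^sup>2)"

definition fnorm :: "nat \<Rightarrow> nat \<Rightarrow> (nat \<Rightarrow> nat \<Rightarrow> real) \<Rightarrow> real" where
  "fnorm k m W = sqrt (\<Sum>i<k. \<Sum>j<m. (W i j)\<^sup>2)"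

lemma frob_dist_fnorm: "frob_dist k m W V = fnorm k m (\<lambda>i j. W i j - V i j)"
  unfolding frob_dist_def fnorm_def ..

lemma fnorm_L2: "fnorm k m W = L2_set (\<lambda>p. W (fst p) (snd p)) ({..<k} \<times> {..<m})"
  unfolding fnorm_def L2_set_def by (simp add: sum.cartesian_product case_prod_beta)

lemma fnorm_nonneg: "0 \<le> fnorm k m W"
  unfolding fnorm_def by (intro real_sqrt_ge_zero sum_nonneg) auto

lemma vnorm_nonneg: "0 \<le> vnorm m x"
  unfolding vnorm_def by (intro real_sqrt_ge_zero sum_nonneg) auto

lemma fnorm_triangle: "fnorm k m (\<lambda>i j. A i j + B i j) \<le> fnorm k m A + fnorm k m B"
  unfolding fnorm_L2 by (rule L2_set_triangle_ineq)

lemma fnorm_hyp: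
  assumes "W \<in> hyp_set k m W0"
  shows "fnorm k m W \<le> fnorm k m W0 + 1"
proof -
  have "fnorm k m W = fnorm k m (\<lambda>i j. W0 i j + (W i j - W0 i j))" by simp
  also have "\<dots> \<le> fnorm k m W0 + fnorm k m (\<lambda>i j. W i j - W0 i j)" by (rule fnorm_triangle)
  also have "\<dots> \<le> fnorm k m W0 + 1"
    using assms unfolding hyp_set_def frob_dist_fnorm by simp
  finally show ?thesis .
qed

lemma mat_inner_le:
  "(\<Sum>i<k. \<Sum>j<m. A i j * M i j) \<le> fnorm k m A * fnorm k m M"
proof -
  have "(\<Sum>i<k. \<Sum>j<m. A i j * M i j) = (\<Sum>p\<in>{..<k}\<times>{..<m}. A (fst p) (snd p) * M (fst p) (snd p))"
    by (simp add: sum.cartesian_product case_prod_beta)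
  also have "\<dots> \<le> (\<Sum>p\<in>{..<k}\<times>{..<m}. \<bar>A (fst p) (snd p)\<bar> * \<bar>M (fst p) (snd p)\<bar>)"
    by (intro sum_mono) (metis abs_ge_self abs_mult)
  also have "\<dots> \<le> fnorm k m A * fnorm k m M"
    unfolding fnorm_L2 by (rule L2_set_mult_ineq)
  finally show ?thesis .
qed

lemma mat_vec_in: "mat_vec k m W x \<in> vec_space k"
  unfolding vec_space_def mat_vec_def by auto

lemma mat_vec_diff:
  "(\<Sum>i<k. (mat_vec k m W x i - mat_vec k m V x i)\<^sup>2) = (\<Sum>i<k. (mat_vec k m (\<lambda>i j. W i j - V i j) x i)\<^sup>2)"
  unfolding mat_vec_def by (intro sum.cong) (auto simp: sum_subtractf left_diff_distrib)

lemma mv_bound: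
  "sqrt (\<Sum>i<k. (mat_vec k m W x i)\<^sup>2) \<le> fnorm k m W * vnorm m x"
proof -
  have "(\<Sum>i<k. (mat_vec k m W x i)\<^sup>2) \<le> (\<Sum>i<k. (\<Sum>j<m. (W i j)\<^sup>2) * (\<Sum>j<m. (x j)\<^sup>2))"
  proof (rule sum_mono)
    fix i assume "i \<in> {..<k}"
    then show "(mat_vec k m W x i)\<^sup>2 \<le> (\<Sum>j<m. (W i j)\<^sup>2) * (\<Sum>j<m. (x j)\<^sup>2)"
      unfolding mat_vec_def by (simp add: Cauchy_Schwarz_ineq_sum)
  qed
  also have "\<dots> = (\<Sum>i<k. \<Sum>j<m. (W i j)\<^sup>2) * (\<Sum>j<m. (x j)\<^sup>2)"
    by (simp add: sum_distrib_right)
  finally have "sqrt (\<Sum>i<k. (mat_vec k m W x i)\<^sup>2) \<le> sqrt ((\<Sum>i<k. \<Sum>j<m. (W i j)\<^sup>2) * (\<Sum>j<m. (x j)\<^sup>2))"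
    by simp
  then show ?thesis unfolding fnorm_def vnorm_def by (simp add: real_sqrt_mult)
qed

lemma mv_coord_bound:
  "\<bar>mat_vec k m W x j\<bar> \<le> fnorm k m W * vnorm m x"
proof (cases "j < k")
  case True
  have "\<bar>mat_vec k m W x j\<bar> = sqrt ((mat_vec k m W x j)\<^sup>2)" by simp
  also have "\<dots> \<le> sqrt (\<Sum>i<k. (mat_vec k m W x i)\<^sup>2)"
    using True by (intro real_sqrt_le_mono member_le_sum) auto
  also have "\<dots> \<le> fnorm k m W * vnorm m x" by (rule mv_bound)
  finally show ?thesis .
next
  case False
  then show ?thesis unfolding mat_vec_def using fnorm_nonneg vnorm_nonneg by simp
qed

lemma loss_lip:
  assumes "lipschitz_loss k G l" "0 \<le> G"
  shows "\<bar>l (mat_vec k m W x) - l (mat_vec k m V x)\<bar> \<le> G * (frob_dist k m W V * vnorm m x)"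
proof -
  have "\<bar>l (mat_vec k m W x) - l (mat_vec k m V x)\<bar> \<le> G * sqrt (\<Sum>i<k. (mat_vec k m W x i - mat_vec k m V x i)\<^sup>2)"
    using assms(1) mat_vec_in unfolding lipschitz_loss_def by blast
  also have "\<dots> \<le> G * (frob_dist k m W V * vnorm m x)"
    unfolding mat_vec_diff frob_dist_fnorm using assms(2) by (intro mult_left_mono mv_bound)
  finally show ?thesis .
qed

lemma loss_lip_vec:
  assumes "lipschitz_loss k G l"
  shows "\<bar>l (mat_vec k m W x) - l (mat_vec k m V x)\<bar> \<le> G * sqrt (\<Sum>j<k. (mat_vec k m W x j - mat_vec k m V x j)\<^sup>2)"
  using assms mat_vec_in unfolding lipschitz_loss_def by blast

lemma loss_bound:
  assumes "lipschitz_loss k G l" "0 \<le> G" "W \<in> hyp_set k m W0"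
  shows "\<bar>l (mat_vec k m W x)\<bar> \<le> \<bar>l (mat_vec k m W0 x)\<bar> + G * vnorm m x"
proof -
  have "frob_dist k m W W0 \<le> 1" using assms(3) unfolding hyp_set_def by simp
  then have "G * (frob_dist k m W W0 * vnorm m x) \<le> G * vnorm m x"
    using assms(2) vnorm_nonneg[of m x] by (intro mult_left_mono mult_left_le_one_le) (auto simp: frob_dist_fnorm fnorm_nonneg)
  moreover have "\<bar>l (mat_vec k m W x) - l (mat_vec k m W0 x)\<bar> \<le> G * (frob_dist k m W W0 * vnorm m x)"
    by (rule loss_lip[OF assms(1,2)])
  ultimately show ?thesis by linarith
qed




lemma Ex_coord_zero:
  assumes "finite I" "p \<in> I"
  shows "Ex I (\<lambda>e. e p) = 0"
proof -
  have "Ex I (\<lambda>e. (\<lambda>x\<in>I. - e x) p) = Ex I (\<lambda>e. e p)" by (rule Ex_neg[OF assms(1)])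
  then have "- Ex I (\<lambda>e. e p) = Ex I (\<lambda>e. e p)" using assms(2) Ex_cmult[of I "-1" "\<lambda>e. e p"] by simp
  then show ?thesis by simp
qed

lemma rearr:
  "(\<Sum>i<n. \<Sum>j<k. e (i,j) * mat_vec k m W (x i) j)
   = (\<Sum>j<k. \<Sum>l<m. W j l * (\<Sum>i<n. e (i,j) * x i l))"
proof -
  have "(\<Sum>i<n. \<Sum>j<k. e (i,j) * mat_vec k m W (x i) j) = (\<Sum>i<n. \<Sum>j<k. \<Sum>l<m. W j l * (e (i,j) * x i l))"
    unfolding mat_vec_def by (intro sum.cong refl) (auto simp: sum_distrib_left algebra_simps)
  also have "\<dots> = (\<Sum>j<k. \<Sum>i<n. \<Sum>l<m. W j l * (e (i,j) * x i l))"
    by (rule sum.swap)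
  also have "\<dots> = (\<Sum>j<k. \<Sum>l<m. \<Sum>i<n. W j l * (e (i,j) * x i l))"
    by (intro sum.cong refl sum.swap)
  also have "\<dots> = (\<Sum>j<k. \<Sum>l<m. W j l * (\<Sum>i<n. e (i,j) * x i l))"
    by (simp add: sum_distrib_left)
  finally show ?thesis .
qed

lemma sum_prod_delta:
  fixes f :: "nat \<Rightarrow> nat \<times> nat \<Rightarrow> real"
  assumes "j < k"
  shows "(\<Sum>p\<in>{..<n}\<times>{..<k}. if snd p = j then f (fst p) p else 0) = (\<Sum>i<n. f i (i,j))"
proof -
  have "(\<Sum>p\<in>{..<n}\<times>{..<k}. if snd p = j then f (fst p) p else 0)
      = (\<Sum>i<n. \<Sum>j'<k. if j' = j then f i (i,j') else 0)"
    by (simp add: sum.cartesian_product' cong: if_cong)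
  also have "\<dots> = (\<Sum>i<n. f i (i,j))"
    using assms by (simp add: sum.delta)
  finally show ?thesis .
qed

lemma rad_linear:
  assumes T: "T \<noteq> {}" "T \<subseteq> hyp_set k m W0" and G: "0 \<le> G"
    and x: "\<And>i. i < n \<Longrightarrow> vnorm m (x i) \<le> 1"
  shows "Ex ({..<n}\<times>{..<k}) (\<lambda>e. SUP W\<in>T. 0 + 2 * G * (\<Sum>i<n. \<Sum>j<k. e (i,j) * mat_vec k m W (x i) j))
      \<le> 2 * G * sqrt (real k * real n)"
proof -
  let ?I = "{..<n}\<times>{..<k}"
  define M where "M = (\<lambda>(e::nat\<times>nat\<Rightarrow>real) (j::nat) (l::nat). \<Sum>i<n. e (i,j) * x i l)"
  define P where "P = (\<lambda>e. \<Sum>j<k. \<Sum>l<m. W0 j l * M e j l)"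
  have step: "(\<Sum>j<k. \<Sum>l<m. W j l * M e j l) \<le> P e + fnorm k m (M e)" if W: "W \<in> T" for W e
  proof -
    have "(\<Sum>j<k. \<Sum>l<m. W j l * M e j l) = P e + (\<Sum>j<k. \<Sum>l<m. (W j l - W0 j l) * M e j l)"
      unfolding P_def by (simp add: sum.distrib[symmetric] algebra_simps)
    also have "\<dots> \<le> P e + fnorm k m (\<lambda>j l. W j l - W0 j l) * fnorm k m (M e)"
      by (intro add_left_mono mat_inner_le[where A="\<lambda>j l. W j l - W0 j l" and M="M e"])
    also have "\<dots> \<le> P e + 1 * fnorm k m (M e)"
      using W T(2) unfolding hyp_set_def frob_dist_fnorm
      by (intro add_left_mono mult_right_mono fnorm_nonneg) auto
    finally show ?thesis by simp
  qed
  have "Ex ?I (\<lambda>e. SUP W\<in>T. 0 + 2 * G * (\<Sum>i<n. \<Sum>j<k. e (i,j) * mat_vec k m W (x i) j))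
      \<le> Ex ?I (\<lambda>e. 2 * G * (P e + fnorm k m (M e)))"
  proof (rule Ex_mono)
    fix e
    show "(SUP W\<in>T. 0 + 2 * G * (\<Sum>i<n. \<Sum>j<k. e (i,j) * mat_vec k m W (x i) j)) \<le> 2 * G * (P e + fnorm k m (M e))"
    proof (rule cSUP_least[OF T(1)])
      fix W assume "W \<in> T"
      then show "0 + 2 * G * (\<Sum>i<n. \<Sum>j<k. e (i,j) * mat_vec k m W (x i) j) \<le> 2 * G * (P e + fnorm k m (M e))"
      proof -
        assume W: "W \<in> T"
        have "(\<Sum>i<n. \<Sum>j<k. e (i,j) * mat_vec k m W (x i) j) = (\<Sum>j<k. \<Sum>l<m. W j l * M e j l)"
          unfolding rearr M_def by simp
        then show ?thesis using step[OF W, of e] G by (simp add: mult_left_mono)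
      qed
    qed
  qed
  also have "\<dots> = 2 * G * (Ex ?I P + Ex ?I (\<lambda>e. fnorm k m (M e)))"
    by (simp add: Ex_add Ex_cmult)
  also have "Ex ?I P = 0"
  proof -
    have "Ex ?I P = (\<Sum>j<k. \<Sum>l<m. \<Sum>i<n. Ex ?I (\<lambda>e. (W0 j l * x i l) * e (i,j)))"
      unfolding P_def M_def by (simp add: Ex_sum sum_distrib_left algebra_simps)
    also have "\<dots> = 0"
      by (simp add: Ex_cmult Ex_coord_zero)
    finally show ?thesis .
  qed
  also have "Ex ?I (\<lambda>e. fnorm k m (M e)) \<le> sqrt (Ex ?I (\<lambda>e. (fnorm k m (M e))\<^sup>2))"
    by (rule Ex_jensen_sqrt) simp
  also have "Ex ?I (\<lambda>e. (fnorm k m (M e))\<^sup>2) = (\<Sum>j<k. \<Sum>l<m. \<Sum>i<n. (x i l)\<^sup>2)"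
  proof -
    have "Ex ?I (\<lambda>e. (fnorm k m (M e))\<^sup>2) = Ex ?I (\<lambda>e. \<Sum>j<k. \<Sum>l<m. (M e j l)\<^sup>2)"
      unfolding fnorm_def by (intro Ex_cong) (simp add: sum_nonneg)
    also have "\<dots> = (\<Sum>j<k. \<Sum>l<m. Ex ?I (\<lambda>e. (M e j l)\<^sup>2))"
      by (simp add: Ex_sum)
    also have "\<dots> = (\<Sum>j<k. \<Sum>l<m. \<Sum>i<n. (x i l)\<^sup>2)"
    proof (intro sum.cong refl)
      fix j l assume j: "j \<in> {..<k}"
      define u where "u = (\<lambda>p::nat\<times>nat. if snd p = j then x (fst p) l else 0)"
      have "\<And>e. M e j l = (\<Sum>p\<in>?I. e p * u p)"
      proof -
        fix e
        have "(\<Sum>p\<in>?I. e p * u p) = (\<Sum>p\<in>?I. if snd p = j then (\<lambda>i p. e p * x i l) (fst p) p else 0)"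
          unfolding u_def by (intro sum.cong) auto
        then show "M e j l = (\<Sum>p\<in>?I. e p * u p)"
          unfolding M_def using sum_prod_delta[where f="\<lambda>i p. e p * x i l" and n=n] j by simp
      qed
      moreover have "(\<Sum>p\<in>?I. (u p)\<^sup>2) = (\<Sum>i<n. (x i l)\<^sup>2)"
      proof -
        have "(\<Sum>p\<in>?I. (u p)\<^sup>2) = (\<Sum>p\<in>?I. if snd p = j then (\<lambda>i p. (x i l)\<^sup>2) (fst p) p else 0)"
          unfolding u_def by (intro sum.cong) auto
        then show ?thesis using sum_prod_delta[where f="\<lambda>i p. (x i l)\<^sup>2" and n=n] j by simp
      qed
      ultimately show "Ex ?I (\<lambda>e. (M e j l)\<^sup>2) = (\<Sum>i<n. (x i l)\<^sup>2)"
        using Ex_M2[of ?I u] by simp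
    qed
    finally show ?thesis .
  qed
  also have "(\<Sum>j<k. \<Sum>l<m. \<Sum>i<n. (x i l)\<^sup>2) \<le> real k * real n"
  proof -
    have "(\<Sum>j<k. \<Sum>l<m. \<Sum>i<n. (x i l)\<^sup>2) = real k * (\<Sum>i<n. \<Sum>l<m. (x i l)\<^sup>2)"
      by (simp add: sum.swap[of _ "{..<m}"])
    also have "\<dots> \<le> real k * (\<Sum>i<n. 1)"
    proof (intro mult_left_mono sum_mono)
      fix i assume "i \<in> {..<n}"
      then have "vnorm m (x i) \<le> 1" using x by simp
      then show "(\<Sum>l<m. (x i l)\<^sup>2) \<le> 1" unfolding vnorm_def by simp
    qed simp
    finally show ?thesis by simp
  qed
  finally show ?thesis using G by (simp add: mult_left_mono)
qed

lemma rad_bound: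
  assumes lip: "lipschitz_loss k G l" and G: "0 \<le> G"
    and T: "T \<noteq> {}" "T \<subseteq> hyp_set k m W0"
    and x: "\<And>i. i < n \<Longrightarrow> vnorm m (x i) \<le> 1"
  shows "Ex {..<n} (\<lambda>\<sigma>. SUP W\<in>T. (\<Sum>i<n. \<sigma> i * l (mat_vec k m W (x i)))) \<le> 2 * G * sqrt (real k * real n)"
proof -
  define B where "B = (\<Sum>i<n. \<bar>l (mat_vec k m W0 (x i))\<bar>) + G + fnorm k m W0 + 1"
  have "Ex {..<n} (\<lambda>\<sigma>. SUP W\<in>T. (\<lambda>_. 0) W + (\<Sum>i<n. \<sigma> i * l (mat_vec k m W (x i))))
    \<le> Ex ({..<n} \<times> {..<k}) (\<lambda>e. SUP W\<in>T. (\<lambda>_. 0) W + 2 * G * (\<Sum>i<n. \<Sum>j<k. e (i,j) * mat_vec k m W (x i) j))"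
  proof (rule contract[OF T(1) G, where B=B and BA=0])
    fix i W assume i: "i < n" and W: "W \<in> T"
    have "\<bar>l (mat_vec k m W (x i))\<bar> \<le> \<bar>l (mat_vec k m W0 (x i))\<bar> + G * vnorm m (x i)"
      using W T(2) by (intro loss_bound[OF lip G]) auto
    also have "\<dots> \<le> \<bar>l (mat_vec k m W0 (x i))\<bar> + G * 1"
      using x[OF i] G by (intro add_left_mono mult_left_mono) auto
    also have "\<bar>l (mat_vec k m W0 (x i))\<bar> \<le> (\<Sum>i<n. \<bar>l (mat_vec k m W0 (x i))\<bar>)"
      using i by (intro member_le_sum) auto
    finally show "\<bar>l (mat_vec k m W (x i))\<bar> \<le> B" unfolding B_def using fnorm_nonneg[of k m W0] by linarith
    fix j
    have "\<bar>mat_vec k m W (x i) j\<bar> \<le> fnorm k m W * vnorm m (x i)" by (rule mv_coord_bound)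
    also have "\<dots> \<le> (fnorm k m W0 + 1) * 1"
      using W T(2) x[OF i] fnorm_nonneg[of k m W0] vnorm_nonneg[of m "x i"]
      by (intro mult_mono fnorm_hyp fnorm_nonneg) auto
    finally have "\<bar>mat_vec k m W (x i) j\<bar> \<le> fnorm k m W0 + 1" by simp
    moreover have "0 \<le> (\<Sum>i<n. \<bar>l (mat_vec k m W0 (x i))\<bar>)" by (intro sum_nonneg) auto
    ultimately show "\<bar>mat_vec k m W (x i) j\<bar> \<le> B"
      unfolding B_def using G by linarith
  next
    fix i W W' assume "i < n" "W \<in> T" "W' \<in> T"
    show "\<bar>l (mat_vec k m W (x i)) - l (mat_vec k m W' (x i))\<bar>
        \<le> G * sqrt (\<Sum>j<k. (mat_vec k m W (x i) j - mat_vec k m W' (x i) j)\<^sup>2)"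
      by (rule loss_lip_vec[OF lip])
  qed simp
  also have "\<dots> \<le> 2 * G * sqrt (real k * real n)"
    by (rule rad_linear[OF T G x])
  finally show ?thesis by simp
qed




lemma cont_loss:
  assumes lip: "lipschitz_loss k G l"
  shows "continuous_on (vec_space k) l"
  unfolding continuous_on_def
proof
  fix y0 assume y0: "y0 \<in> vec_space k"
  define g where "g = (\<lambda>y::nat\<Rightarrow>real. G * sqrt (\<Sum>i<k. (y i - y0 i)\<^sup>2))"
  have "continuous_on UNIV g"
    unfolding g_def by (intro continuous_intros continuous_on_product_coordinates)
  then have "(g \<longlongrightarrow> g y0) (at y0 within vec_space k)"
    by (meson UNIV_I continuous_on_def continuous_on_subset subset_UNIV tendsto_within_subset)
  then have g0: "(g \<longlongrightarrow> 0) (at y0 within vec_space k)" unfolding g_def by simp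
  have ev: "eventually (\<lambda>y. norm (l y - l y0) \<le> g y) (at y0 within vec_space k)"
    unfolding eventually_at_filter
    by (rule always_eventually) (use lip y0 in \<open>auto simp: lipschitz_loss_def g_def\<close>)
  have "((\<lambda>y. l y - l y0) \<longlongrightarrow> 0) (at y0 within vec_space k)"
    by (rule Lim_null_comparison[OF ev g0])
  then show "(l \<longlongrightarrow> l y0) (at y0 within vec_space k)"
    by (rule LIM_zero_cancel)
qed

lemma loss_meas:
  assumes lip: "lipschitz_loss k G l"
    and sD: "sets D = sets (PiM {..<m} (\<lambda>_. borel))"
  shows "(\<lambda>x. l (mat_vec k m W x)) \<in> borel_measurable D"
proof -
  define P where "P = (\<lambda>(y::nat\<Rightarrow>real) i. if i < k then y i else (0::real))"
  have cP: "continuous_on UNIV P"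
    unfolding P_def
  proof (intro continuous_on_coordinatewise_then_product)
    fix i show "continuous_on UNIV (\<lambda>x::nat\<Rightarrow>real. if i < k then x i else 0)"
      by (cases "i < k") auto
  qed
  have "continuous_on UNIV (\<lambda>y. l (P y))"
    by (rule continuous_on_compose2[OF cont_loss[OF lip] cP]) (auto simp: P_def vec_space_def)
  then have lm: "(\<lambda>y. l (P y)) \<in> borel_measurable borel" by (rule borel_measurable_continuous_onI)
  have "(\<lambda>x i. mat_vec k m W x i) \<in> measurable (PiM {..<m} (\<lambda>_. borel)) (PiM UNIV (\<lambda>_. borel::real measure))"
  proof (rule measurable_PiM_single')
    fix i :: nat
    show "(\<lambda>x. mat_vec k m W x i) \<in> borel_measurable (PiM {..<m} (\<lambda>_. borel))"
      unfolding mat_vec_def by measurable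
  qed auto
  moreover have "measurable D borel = measurable (PiM {..<m} (\<lambda>_. borel)) (PiM UNIV (\<lambda>_::nat. borel::real measure))"
    by (rule measurable_cong_sets[OF sD sets_PiM_equal_borel[symmetric]])
  ultimately have "mat_vec k m W \<in> measurable D borel"
    by simp
  then have "(\<lambda>x. l (P (mat_vec k m W x))) \<in> borel_measurable D"
    using lm by measurable
  moreover have "\<And>x. P (mat_vec k m W x) = mat_vec k m W x"
    unfolding P_def mat_vec_def by auto
  ultimately show ?thesis by simp
qed




definition HQ :: "nat \<Rightarrow> nat \<Rightarrow> (nat \<Rightarrow> nat \<Rightarrow> real) \<Rightarrow> (nat \<Rightarrow> nat \<Rightarrow> real) set" where
  "HQ k m W0 = {W \<in> hyp_set k m W0. \<forall>i j. W i j - W0 i j \<in> \<rat>}"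

lemma HQ_sub: "HQ k m W0 \<subseteq> hyp_set k m W0"
  unfolding HQ_def by auto

lemma W0_HQ: "is_matrix k m W0 \<Longrightarrow> W0 \<in> HQ k m W0"
  unfolding HQ_def hyp_set_def frob_dist_def by auto

lemma countable_HQ: "countable (HQ k m W0)"
proof -
  define g where "g = (\<lambda>W::nat\<Rightarrow>nat\<Rightarrow>real. restrict (\<lambda>p. W (fst p) (snd p) - W0 (fst p) (snd p)) ({..<k}\<times>{..<m}))"
  have "g ` HQ k m W0 \<subseteq> PiE ({..<k}\<times>{..<m}) (\<lambda>_. \<rat>)"
    unfolding g_def HQ_def by (intro image_subsetI) (auto simp: restrict_PiE_iff)
  moreover have "countable (PiE ({..<k}\<times>{..<m}) (\<lambda>_. \<rat>))"
    by (intro countable_PiE countable_rat) auto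
  ultimately have "countable (g ` HQ k m W0)" by (rule countable_subset)
  moreover have "inj_on g (HQ k m W0)"
  proof (rule inj_onI)
    fix W V assume W: "W \<in> HQ k m W0" and V: "V \<in> HQ k m W0" and eq: "g W = g V"
    show "W = V"
    proof (intro ext)
      fix i j
      show "W i j = V i j"
      proof (cases "i < k \<and> j < m")
        case True
        then have "g W (i,j) = g V (i,j)" using eq by simp
        then show ?thesis using True unfolding g_def by simp
      next
        case False
        then show ?thesis using W V unfolding HQ_def hyp_set_def is_matrix_def by auto
      qed
    qed
  qed
  ultimately show ?thesis by (rule countable_image_inj_on)
qed

lemma fnorm_cong:
  "(\<And>i j. i < k \<Longrightarrow> j < m \<Longrightarrow> A i j = B i j) \<Longrightarrow> fnorm k m A = fnorm k m B"
  unfolding fnorm_def by (intro arg_cong[where f=sqrt] sum.cong) auto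

lemma fnorm_scale: "fnorm k m (\<lambda>i j. c * A i j) = \<bar>c\<bar> * fnorm k m A"
proof -
  have "(\<Sum>i<k. \<Sum>j<m. (c * A i j)\<^sup>2) = c\<^sup>2 * (\<Sum>i<k. \<Sum>j<m. (A i j)\<^sup>2)"
    by (simp add: sum_distrib_left power_mult_distrib)
  then show ?thesis unfolding fnorm_def by (simp add: real_sqrt_mult)
qed

lemma dense_HQ:
  assumes W0: "is_matrix k m W0" and V: "V \<in> hyp_set k m W0" and d: "0 < \<delta>"
  shows "\<exists>W\<in>HQ k m W0. frob_dist k m W V \<le> \<delta>"
proof -
  define t where "t = min (\<delta>/2) (1/2)"
  have t0: "0 < t" "t \<le> \<delta>/2" "t \<le> 1/2" using d unfolding t_def by auto
  define Dm where "Dm = (\<lambda>i j. V i j - W0 i j)"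
  have fD: "fnorm k m Dm \<le> 1" using V unfolding hyp_set_def frob_dist_fnorm Dm_def by simp
  define D' where "D' = (\<lambda>i j. (1 - t) * Dm i j)"
  define N where "N = real (k * m)"
  have N0: "0 \<le> N" unfolding N_def by simp
  define \<eta> where "\<eta> = t / (N + 1)"
  have eta0: "0 < \<eta>" unfolding \<eta>_def using t0 N0 by (intro divide_pos_pos add_nonneg_pos) auto
  have "\<forall>i j. \<exists>q. q \<in> \<rat> \<and> \<bar>q - D' i j\<bar> < \<eta>"
  proof (intro allI)
    fix i j
    obtain q where "q \<in> \<rat>" "D' i j - \<eta> < q" "q < D' i j + \<eta>"
      using Rats_dense_in_real[of "D' i j - \<eta>" "D' i j + \<eta>"] eta0 by auto
    then show "\<exists>q. q \<in> \<rat> \<and> \<bar>q - D' i j\<bar> < \<eta>" by (intro exI[of _ q]) auto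
  qed
  then obtain r where r: "\<And>i j. r i j \<in> \<rat>" "\<And>i j. \<bar>r i j - D' i j\<bar> < \<eta>" by metis
  define R where "R = (\<lambda>i j. if i < k \<and> j < m then r i j else 0)"
  define W where "W = (\<lambda>i j. W0 i j + R i j)"
  have fRD: "fnorm k m (\<lambda>i j. R i j - D' i j) \<le> t"
  proof -
    have "(\<Sum>i<k. \<Sum>j<m. (R i j - D' i j)\<^sup>2) \<le> (\<Sum>i<k. \<Sum>j<m. \<eta>\<^sup>2)"
    proof (intro sum_mono)
      fix i j assume "i \<in> {..<k}" "j \<in> {..<m}"
      then have "\<bar>R i j - D' i j\<bar> \<le> \<eta>" using r(2)[of i j] unfolding R_def by simp
      then have "\<bar>R i j - D' i j\<bar>\<^sup>2 \<le> \<eta>\<^sup>2" by (intro power_mono) auto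
      then show "(R i j - D' i j)\<^sup>2 \<le> \<eta>\<^sup>2" by simp
    qed
    also have "\<dots> = N * \<eta>\<^sup>2" unfolding N_def by simp
    also have "\<dots> \<le> t\<^sup>2"
    proof -
      have "N * \<eta>\<^sup>2 = t\<^sup>2 * (N / (N + 1)\<^sup>2)"
        unfolding \<eta>_def power_divide by simp
      also have "\<dots> \<le> t\<^sup>2 * 1"
      proof (intro mult_left_mono)
        have "N \<le> (N + 1)\<^sup>2" using N0 by (simp add: power2_eq_square algebra_simps)
        moreover have "0 < (N + 1)\<^sup>2" using N0 by simp
        ultimately show "N / (N + 1)\<^sup>2 \<le> 1" by simp
      qed simp
      finally show ?thesis by simp
    qed
    finally show ?thesis unfolding fnorm_def using t0 by (simp add: real_le_lsqrt)
  qed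
  have fD': "fnorm k m D' = (1 - t) * fnorm k m Dm"
    unfolding D'_def fnorm_scale using t0 by simp
  have WHQ: "W \<in> HQ k m W0"
  proof -
    have "is_matrix k m W" using W0 unfolding is_matrix_def W_def R_def by auto
    moreover have "fnorm k m R \<le> 1"
    proof -
      have "fnorm k m R = fnorm k m (\<lambda>i j. D' i j + (R i j - D' i j))" by simp
      also have "\<dots> \<le> fnorm k m D' + fnorm k m (\<lambda>i j. R i j - D' i j)" by (rule fnorm_triangle)
      also have "\<dots> \<le> (1 - t) * 1 + t"
        using fRD fD' fD t0 by (intro add_mono) (auto intro: mult_left_mono)
      finally show ?thesis by simp
    qed
    moreover have "\<forall>i j. W i j - W0 i j \<in> \<rat>" unfolding W_def R_def using r(1) by auto
    ultimately show ?thesis unfolding HQ_def hyp_set_def frob_dist_fnorm W_def by simp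
  qed
  moreover have "frob_dist k m W V \<le> \<delta>"
  proof -
    have "frob_dist k m W V = fnorm k m (\<lambda>i j. (R i j - D' i j) + (D' i j - Dm i j))"
      unfolding frob_dist_fnorm W_def Dm_def by (intro fnorm_cong) simp
    also have "\<dots> \<le> fnorm k m (\<lambda>i j. R i j - D' i j) + fnorm k m (\<lambda>i j. D' i j - Dm i j)"
      by (rule fnorm_triangle)
    also have "fnorm k m (\<lambda>i j. D' i j - Dm i j) = fnorm k m (\<lambda>i j. (- t) * Dm i j)"
      unfolding D'_def by (intro fnorm_cong) (simp add: algebra_simps)
    also have "\<dots> = t * fnorm k m Dm" unfolding fnorm_scale using t0 by simp
    also have "fnorm k m (\<lambda>i j. R i j - D' i j) + t * fnorm k m Dm \<le> t + t * 1"
      using fRD fD t0 by (intro add_mono mult_left_mono) auto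
    finally show ?thesis using t0 by simp
  qed
  ultimately show ?thesis by blast
qed




locale erm =
  fixes k n m :: nat and W0 :: "nat \<Rightarrow> nat \<Rightarrow> real" and l :: "(nat \<Rightarrow> real) \<Rightarrow> real"
    and D :: "(nat \<Rightarrow> real) measure" and G :: real
  assumes G: "0 \<le> G" and n1: "1 \<le> n" and W0: "is_matrix k m W0"
    and lip: "lipschitz_loss k G l" and UD: "unit_ball_dist m D"
begin

abbreviation "HH \<equiv> hyp_set k m W0"
abbreviation "TT \<equiv> HQ k m W0"
abbreviation "f W x \<equiv> l (mat_vec k m W x)"
abbreviation "PM I \<equiv> PiM I (\<lambda>_. D)"

definition c0 where "c0 = \<bar>l (\<lambda>_. 0)\<bar> + G * (fnorm k m W0 + 1)"

lemma probD: "prob_space D" using UD unfolding unit_ball_dist_def by simp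
lemma setsD: "sets D = sets (PiM {..<m} (\<lambda>_. borel))" using UD unfolding unit_ball_dist_def by simp
lemma ballD: "AE x in D. vnorm m x \<le> 1"
  using UD unfolding unit_ball_dist_def vnorm_def by (auto elim!: eventually_mono)

lemma TT_ne: "TT \<noteq> {}" using W0_HQ[OF W0] by auto
lemma TT_H: "W \<in> TT \<Longrightarrow> W \<in> HH" using HQ_sub by auto

lemma f_meas: "f W \<in> borel_measurable D"
  by (rule loss_meas[OF lip setsD])

lemma f_bound_gen:
  assumes "W \<in> HH"
  shows "\<bar>f W x\<bar> \<le> \<bar>l (\<lambda>_. 0)\<bar> + G * (fnorm k m W0 + 1) * vnorm m x"
proof -
  have z: "(\<lambda>_. 0::real) \<in> vec_space k" unfolding vec_space_def by simp
  have "\<bar>f W x - l (\<lambda>_. 0)\<bar> \<le> G * sqrt (\<Sum>i<k. (mat_vec k m W x i - 0)\<^sup>2)"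
    using lip mat_vec_in z unfolding lipschitz_loss_def by blast
  also have "\<dots> \<le> G * (fnorm k m W * vnorm m x)" using mv_bound G by (simp add: mult_left_mono)
  also have "\<dots> \<le> G * ((fnorm k m W0 + 1) * vnorm m x)"
    using fnorm_hyp[OF assms] G vnorm_nonneg by (intro mult_left_mono mult_right_mono) auto
  finally show ?thesis by (simp add: algebra_simps)
qed

lemma c0_nonneg: "0 \<le> c0" unfolding c0_def using G fnorm_nonneg[of k m W0] by simp

lemma f_bound:
  assumes "W \<in> HH" "vnorm m x \<le> 1"
  shows "\<bar>f W x\<bar> \<le> c0"
proof -
  have "G * (fnorm k m W0 + 1) * vnorm m x \<le> G * (fnorm k m W0 + 1) * 1"
    using assms(2) G fnorm_nonneg[of k m W0] by (intro mult_left_mono) auto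
  then show ?thesis using f_bound_gen[OF assms(1), of x] unfolding c0_def by simp
qed

lemma f_int: "W \<in> HH \<Longrightarrow> integrable D (f W)"
proof -
  assume W: "W \<in> HH"
  interpret prob_space D by (rule probD)
  show ?thesis
    by (rule integrable_const_bound[where B=c0]) (use ballD f_bound[OF W] f_meas in \<open>auto elim!: eventually_mono\<close>)
qed

lemma probPM: "prob_space (PM I)" by (intro prob_space_PiM probD)

lemma comp_meas: "i \<in> I \<Longrightarrow> (\<lambda>\<omega>. f W (\<omega> i)) \<in> borel_measurable (PM I)"
  using f_meas measurable_component_singleton[of i I "\<lambda>_. D"] by (rule measurable_compose[rotated])

lemma distr_comp: "i \<in> I \<Longrightarrow> distr (PM I) D (\<lambda>\<omega>. \<omega> i) = D"
  by (rule distr_PiM_component) (auto intro: probD)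

lemma comp_integral:
  assumes "i \<in> I"
  shows "integral\<^sup>L (PM I) (\<lambda>\<omega>. f W (\<omega> i)) = pop_risk k m D l W"
proof -
  have "integral\<^sup>L (distr (PM I) D (\<lambda>\<omega>. \<omega> i)) (f W) = integral\<^sup>L (PM I) (\<lambda>\<omega>. f W (\<omega> i))"
    using assms by (intro integral_distr f_meas measurable_component_singleton)
  then show ?thesis unfolding distr_comp[OF assms] pop_risk_def by simp
qed

lemma comp_integrable:
  assumes "i \<in> I" "W \<in> HH"
  shows "integrable (PM I) (\<lambda>\<omega>. f W (\<omega> i))"
proof -
  have "integrable (distr (PM I) D (\<lambda>\<omega>. \<omega> i)) (f W) = integrable (PM I) (\<lambda>\<omega>. f W (\<omega> i))"
    using assms by (intro integrable_distr_eq f_meas measurable_component_singleton)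
  then show ?thesis using f_int[OF assms(2)] unfolding distr_comp[OF assms(1)] by simp
qed

lemma AE_ball_PM:
  assumes "finite I"
  shows "AE \<omega> in PM I. \<forall>i\<in>I. vnorm m (\<omega> i) \<le> 1"
  using assms by (intro eventually_ball_finite ballI AE_PiM_component probD ballD) auto

end




context erm begin

abbreviation "I1 \<equiv> {..<n}"
abbreviation "J2 \<equiv> {n..<2*n}"
abbreviation "KK \<equiv> I1 \<union> J2"

definition gap where "gap W \<omega> = (\<Sum>i<n. f W (\<omega> (i+n)) - f W (\<omega> i))"
definition Psi where "Psi \<omega> = (SUP W\<in>TT. gap W \<omega>)"

definition Bw where "Bw \<omega> = (\<Sum>i<n. 2 * \<bar>l (\<lambda>_. 0)\<bar> + G * (fnorm k m W0 + 1) * (vnorm m (\<omega> (i+n)) + vnorm m (\<omega> i)))"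

lemma gap_bound_gen: "W \<in> HH \<Longrightarrow> \<bar>gap W \<omega>\<bar> \<le> Bw \<omega>"
proof -
  assume W: "W \<in> HH"
  have "\<bar>gap W \<omega>\<bar> \<le> (\<Sum>i<n. \<bar>f W (\<omega> (i+n)) - f W (\<omega> i)\<bar>)" unfolding gap_def by (rule sum_abs)
  also have "\<dots> \<le> Bw \<omega>" unfolding Bw_def
  proof (rule sum_mono)
    fix i
    show "\<bar>f W (\<omega> (i+n)) - f W (\<omega> i)\<bar> \<le> 2 * \<bar>l (\<lambda>_. 0)\<bar> + G * (fnorm k m W0 + 1) * (vnorm m (\<omega> (i+n)) + vnorm m (\<omega> i))"
      using f_bound_gen[OF W, of "\<omega> (i+n)"] f_bound_gen[OF W, of "\<omega> i"] by (simp add: algebra_simps)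
  qed
  finally show ?thesis .
qed

lemma bdd_gap: "bdd_above ((\<lambda>W. gap W \<omega>) ` TT)"
proof (rule bdd_aboveI2)
  fix W assume "W \<in> TT"
  then have "\<bar>gap W \<omega>\<bar> \<le> Bw \<omega>" by (intro gap_bound_gen TT_H)
  then show "gap W \<omega> \<le> Bw \<omega>" by simp
qed

lemma gap_meas: "gap W \<in> borel_measurable (PM KK)"
proof -
  have "\<And>i. i < n \<Longrightarrow> (\<lambda>\<omega>. f W (\<omega> (i+n))) \<in> borel_measurable (PM KK)"
    by (intro comp_meas) auto
  moreover have "\<And>i. i < n \<Longrightarrow> (\<lambda>\<omega>. f W (\<omega> i)) \<in> borel_measurable (PM KK)"
    by (intro comp_meas) auto
  ultimately show ?thesis unfolding gap_def
    by (intro borel_measurable_sum borel_measurable_diff) auto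
qed

lemma Psi_meas: "Psi \<in> borel_measurable (PM KK)"
  unfolding Psi_def by (intro borel_measurable_cSUP countable_HQ gap_meas bdd_gap)

lemma gap_le_Psi:
  assumes V: "V \<in> HH"
  shows "gap V \<omega> \<le> Psi \<omega>"
proof (rule field_le_epsilon)
  fix e :: real assume e: "0 < e"
  define K where "K = (\<Sum>i<n. G * (vnorm m (\<omega> (i+n)) + vnorm m (\<omega> i)))"
  have K0: "0 \<le> K" unfolding K_def using G vnorm_nonneg by (intro sum_nonneg) auto
  have "0 < e / (K + 1)" using e K0 by simp
  then obtain W where W: "W \<in> TT" and dW: "frob_dist k m W V \<le> e / (K + 1)"
    using dense_HQ[OF W0 V] by blast
  have dW0: "0 \<le> frob_dist k m W V" unfolding frob_dist_fnorm by (rule fnorm_nonneg)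
  have "\<bar>gap V \<omega> - gap W \<omega>\<bar> \<le> frob_dist k m W V * K"
  proof -
    have "\<bar>gap V \<omega> - gap W \<omega>\<bar> = \<bar>\<Sum>i<n. (f V (\<omega> (i+n)) - f W (\<omega> (i+n))) - (f V (\<omega> i) - f W (\<omega> i))\<bar>"
      unfolding gap_def by (simp add: sum_subtractf[symmetric] algebra_simps)
    also have "\<dots> \<le> (\<Sum>i<n. \<bar>(f V (\<omega> (i+n)) - f W (\<omega> (i+n))) - (f V (\<omega> i) - f W (\<omega> i))\<bar>)"
      by (rule sum_abs)
    also have "\<dots> \<le> (\<Sum>i<n. frob_dist k m W V * (G * (vnorm m (\<omega> (i+n)) + vnorm m (\<omega> i))))"
    proof (rule sum_mono)
      fix i
      have a: "\<bar>f W (\<omega> (i+n)) - f V (\<omega> (i+n))\<bar> \<le> G * (frob_dist k m W V * vnorm m (\<omega> (i+n)))"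
        by (rule loss_lip[OF lip G])
      have b: "\<bar>f W (\<omega> i) - f V (\<omega> i)\<bar> \<le> G * (frob_dist k m W V * vnorm m (\<omega> i))"
        by (rule loss_lip[OF lip G])
      show "\<bar>(f V (\<omega> (i+n)) - f W (\<omega> (i+n))) - (f V (\<omega> i) - f W (\<omega> i))\<bar>
          \<le> frob_dist k m W V * (G * (vnorm m (\<omega> (i+n)) + vnorm m (\<omega> i)))"
        using a b by (simp add: algebra_simps abs_minus_commute)
    qed
    also have "\<dots> = frob_dist k m W V * K" unfolding K_def by (simp add: sum_distrib_left)
    finally show ?thesis .
  qed
  also have "\<dots> \<le> e / (K + 1) * K" using dW K0 by (intro mult_right_mono) auto
  also have "\<dots> \<le> e"
  proof -
    have "e / (K + 1) * K = e * (K / (K + 1))" by simp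
    also have "\<dots> \<le> e * 1" using e K0 by (intro mult_left_mono) auto
    finally show ?thesis by simp
  qed
  finally have "gap V \<omega> \<le> gap W \<omega> + e" by linarith
  also have "gap W \<omega> \<le> Psi \<omega>" unfolding Psi_def by (rule cSUP_upper[OF W bdd_gap])
  finally show "gap V \<omega> \<le> Psi \<omega> + e" by simp
qed

lemma gap_bound_ball:
  assumes "W \<in> HH" "\<And>j. j \<in> KK \<Longrightarrow> vnorm m (\<omega> j) \<le> 1"
  shows "\<bar>gap W \<omega>\<bar> \<le> 2 * real n * c0"
proof -
  have "\<bar>gap W \<omega>\<bar> \<le> (\<Sum>i<n. \<bar>f W (\<omega> (i+n)) - f W (\<omega> i)\<bar>)" unfolding gap_def by (rule sum_abs)
  also have "\<dots> \<le> (\<Sum>i<n. 2 * c0)"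
  proof (rule sum_mono)
    fix i assume "i \<in> {..<n}"
    then have "vnorm m (\<omega> (i+n)) \<le> 1" "vnorm m (\<omega> i) \<le> 1" using assms(2) by auto
    then show "\<bar>f W (\<omega> (i+n)) - f W (\<omega> i)\<bar> \<le> 2 * c0"
      using f_bound[OF assms(1)] by (smt (verit))
  qed
  finally show ?thesis by simp
qed

lemma Psi_bound:
  assumes "\<And>j. j \<in> KK \<Longrightarrow> vnorm m (\<omega> j) \<le> 1"
  shows "\<bar>Psi \<omega>\<bar> \<le> 2 * real n * c0"
proof -
  have "Psi \<omega> \<le> 2 * real n * c0" unfolding Psi_def
  proof (intro cSUP_least TT_ne)
    fix W assume "W \<in> TT"
    then have "\<bar>gap W \<omega>\<bar> \<le> 2 * real n * c0" using gap_bound_ball TT_H assms by blast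
    then show "gap W \<omega> \<le> 2 * real n * c0" by simp
  qed
  moreover have "gap W0 \<omega> \<le> Psi \<omega>" unfolding Psi_def by (rule cSUP_upper[OF W0_HQ[OF W0] bdd_gap])
  moreover have "\<bar>gap W0 \<omega>\<bar> \<le> 2 * real n * c0" using gap_bound_ball TT_H W0_HQ[OF W0] assms by blast
  ultimately show ?thesis by linarith
qed

lemma Psi_int: "integrable (PM KK) Psi"
proof -
  interpret prob_space "PM KK" by (rule probPM)
  show ?thesis
    by (rule integrable_const_bound[where B="2 * real n * c0"])
       (use AE_ball_PM[of KK] Psi_bound Psi_meas in \<open>auto elim!: eventually_mono\<close>)
qed

end




context erm begin

definition pi :: "(nat \<Rightarrow> real) \<Rightarrow> nat \<Rightarrow> nat" where
  "pi \<sigma> j = (if j < n then (if \<sigma> j = 1 then j else j + n) else (if \<sigma> (j - n) = 1 then j else j - n))"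

lemma pi_inj: "inj_on (pi \<sigma>) KK"
  unfolding inj_on_def pi_def by (auto split: if_splits)

lemma pi_into: "pi \<sigma> \<in> KK \<rightarrow> KK"
  unfolding pi_def by auto

abbreviation "sw \<sigma> \<equiv> (\<lambda>\<omega>. \<lambda>j\<in>KK. \<omega> (pi \<sigma> j))"

lemma swap_distr: "distr (PM KK) (PM KK) (sw \<sigma>) = PM KK"
  using distr_PiM_reindex[of KK "\<lambda>_. D" "pi \<sigma>" KK] probD pi_inj pi_into by simp

lemma swap_meas: "sw \<sigma> \<in> measurable (PM KK) (PM KK)"
proof (rule measurable_restrict)
  fix j assume "j \<in> KK"
  then have "pi \<sigma> j \<in> KK" using pi_into by blast
  then show "(\<lambda>\<omega>. \<omega> (pi \<sigma> j)) \<in> measurable (PM KK) D"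
    by (rule measurable_component_singleton)
qed

definition Psis where "Psis \<sigma> \<omega> = (SUP W\<in>TT. \<Sum>i<n. \<sigma> i * (f W (\<omega> (i+n)) - f W (\<omega> i)))"

lemma Psi_swap:
  assumes s: "\<sigma> \<in> sgns I1"
  shows "Psi (sw \<sigma> \<omega>) = Psis \<sigma> \<omega>"
  unfolding Psi_def Psis_def
proof (intro SUP_cong refl)
  fix W
  show "gap W (sw \<sigma> \<omega>) = (\<Sum>i<n. \<sigma> i * (f W (\<omega> (i+n)) - f W (\<omega> i)))"
    unfolding gap_def
  proof (intro sum.cong refl)
    fix i assume i: "i \<in> {..<n}"
    then have "\<sigma> i = -1 \<or> \<sigma> i = 1" using sgns_val[OF s] by auto
    then show "f W (sw \<sigma> \<omega> (i+n)) - f W (sw \<sigma> \<omega> i) = \<sigma> i * (f W (\<omega> (i+n)) - f W (\<omega> i))"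
      using i unfolding pi_def by auto
  qed
qed

lemma int_swap:
  assumes s: "\<sigma> \<in> sgns I1"
  shows "integrable (PM KK) (Psis \<sigma>)" "integral\<^sup>L (PM KK) (Psis \<sigma>) = integral\<^sup>L (PM KK) Psi"
proof -
  have "integrable (distr (PM KK) (PM KK) (sw \<sigma>)) Psi = integrable (PM KK) (\<lambda>\<omega>. Psi (sw \<sigma> \<omega>))"
    by (intro integrable_distr_eq swap_meas Psi_meas)
  then have "integrable (PM KK) (\<lambda>\<omega>. Psi (sw \<sigma> \<omega>))" using Psi_int swap_distr by simp
  then show "integrable (PM KK) (Psis \<sigma>)" using Psi_swap[OF s] by simp
  have "integral\<^sup>L (distr (PM KK) (PM KK) (sw \<sigma>)) Psi = integral\<^sup>L (PM KK) (\<lambda>\<omega>. Psi (sw \<sigma> \<omega>))"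
    by (intro integral_distr swap_meas Psi_meas)
  then show "integral\<^sup>L (PM KK) (Psis \<sigma>) = integral\<^sup>L (PM KK) Psi"
    using swap_distr Psi_swap[OF s] by simp
qed

lemma bdd_rad:
  assumes x: "\<And>i. i < n \<Longrightarrow> vnorm m (x i) \<le> 1"
  shows "bdd_above ((\<lambda>W. \<Sum>i<n. s i * f W (x i)) ` TT)"
proof (rule bdd_aboveI2)
  fix W assume W: "W \<in> TT"
  have "(\<Sum>i<n. s i * f W (x i)) \<le> (\<Sum>i<n. \<bar>s i\<bar> * c0)"
  proof (rule sum_mono)
    fix i assume "i \<in> {..<n}"
    then have "\<bar>f W (x i)\<bar> \<le> c0" using f_bound[OF TT_H[OF W] x] by simp
    then have "\<bar>s i * f W (x i)\<bar> \<le> \<bar>s i\<bar> * c0" by (simp add: abs_mult mult_left_mono)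
    then show "s i * f W (x i) \<le> \<bar>s i\<bar> * c0" by simp
  qed
  then show "(\<Sum>i<n. s i * f W (x i)) \<le> (\<Sum>i<n. \<bar>s i\<bar> * c0)" .
qed

lemma pointwise:
  assumes b: "\<And>j. j \<in> KK \<Longrightarrow> vnorm m (\<omega> j) \<le> 1"
  shows "Ex I1 (\<lambda>\<sigma>. Psis \<sigma> \<omega>) \<le> 4 * G * sqrt (real k * real n)"
proof -
  define Ra where "Ra = (\<lambda>x (\<sigma>::nat\<Rightarrow>real). SUP W\<in>TT. \<Sum>i<n. \<sigma> i * f W (x i))"
  define x1 where "x1 = (\<lambda>i. \<omega> (i+n))"
  define x2 where "x2 = (\<lambda>i. \<omega> i)"
  have b1: "\<And>i. i < n \<Longrightarrow> vnorm m (x1 i) \<le> 1" unfolding x1_def using b by auto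
  have b2: "\<And>i. i < n \<Longrightarrow> vnorm m (x2 i) \<le> 1" unfolding x2_def using b by auto
  have "Ex I1 (\<lambda>\<sigma>. Psis \<sigma> \<omega>) \<le> Ex I1 (\<lambda>\<sigma>. Ra x1 \<sigma> + Ra x2 (\<lambda>i\<in>I1. - \<sigma> i))"
  proof (rule Ex_mono)
    fix \<sigma>
    show "Psis \<sigma> \<omega> \<le> Ra x1 \<sigma> + Ra x2 (\<lambda>i\<in>I1. - \<sigma> i)"
      unfolding Psis_def
    proof (rule cSUP_least[OF TT_ne])
      fix W assume W: "W \<in> TT"
      have "(\<Sum>i<n. \<sigma> i * (f W (\<omega> (i+n)) - f W (\<omega> i)))
          = (\<Sum>i<n. \<sigma> i * f W (x1 i)) + (\<Sum>i<n. (\<lambda>i\<in>I1. - \<sigma> i) i * f W (x2 i))"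
        unfolding x1_def x2_def by (simp add: sum.distrib[symmetric] algebra_simps)
      also have "\<dots> \<le> Ra x1 \<sigma> + Ra x2 (\<lambda>i\<in>I1. - \<sigma> i)"
        unfolding Ra_def by (intro add_mono cSUP_upper[OF W] bdd_rad b1 b2)
      finally show "(\<Sum>i<n. \<sigma> i * (f W (\<omega> (i+n)) - f W (\<omega> i))) \<le> Ra x1 \<sigma> + Ra x2 (\<lambda>i\<in>I1. - \<sigma> i)" .
    qed
  qed
  also have "\<dots> = Ex I1 (Ra x1) + Ex I1 (Ra x2)"
    by (simp add: Ex_add Ex_neg)
  also have "\<dots> \<le> 2 * G * sqrt (real k * real n) + 2 * G * sqrt (real k * real n)"
    unfolding Ra_def
    by (intro add_mono rad_bound[OF lip G TT_ne HQ_sub] b1 b2)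
  finally show ?thesis by simp
qed

lemma ghost_bound: "integral\<^sup>L (PM KK) Psi \<le> 4 * G * sqrt (real k * real n)"
proof -
  interpret P: prob_space "PM KK" by (rule probPM)
  have "integral\<^sup>L (PM KK) Psi = Ex I1 (\<lambda>\<sigma>. integral\<^sup>L (PM KK) Psi)" by simp
  also have "\<dots> = Ex I1 (\<lambda>\<sigma>. integral\<^sup>L (PM KK) (Psis \<sigma>))"
    by (intro Ex_cong) (simp add: int_swap)
  also have "\<dots> = integral\<^sup>L (PM KK) (\<lambda>\<omega>. Ex I1 (\<lambda>\<sigma>. Psis \<sigma> \<omega>))"
    unfolding Ex_def by (simp add: Bochner_Integration.integral_sum int_swap)
  also have "\<dots> \<le> integral\<^sup>L (PM KK) (\<lambda>\<omega>. 4 * G * sqrt (real k * real n))"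
  proof (rule integral_mono_AE)
    show "integrable (PM KK) (\<lambda>\<omega>. Ex I1 (\<lambda>\<sigma>. Psis \<sigma> \<omega>))"
      unfolding Ex_def by (intro integrable_divide_zero Bochner_Integration.integrable_sum int_swap)
    show "integrable (PM KK) (\<lambda>\<omega>. 4 * G * sqrt (real k * real n))" by simp
    show "AE \<omega> in PM KK. Ex I1 (\<lambda>\<sigma>. Psis \<sigma> \<omega>) \<le> 4 * G * sqrt (real k * real n)"
      using AE_ball_PM[of KK] by (auto elim!: eventually_mono intro: pointwise)
  qed
  also have "\<dots> = 4 * G * sqrt (real k * real n)" using P.prob_space by simp
  finally show ?thesis .
qed

end




context erm begin

lemma PS: "product_sigma_finite (\<lambda>_. D)"
  unfolding product_sigma_finite_def using prob_space_imp_sigma_finite[OF probD] by simp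

lemma merge_meas:
  assumes S: "S \<in> space (PM I1)"
  shows "(\<lambda>y. merge I1 J2 (S, y)) \<in> measurable (PM J2) (PM KK)"
  using measurable_comp[OF measurable_Pair1'[OF S] measurable_merge] by (simp add: comp_def)

lemma inner_int:
  assumes S: "S \<in> space (PM I1)" and Sb: "\<forall>i\<in>I1. vnorm m (S i) \<le> 1"
  shows "integrable (PM J2) (\<lambda>y. Psi (merge I1 J2 (S, y)))"
proof -
  interpret P: prob_space "PM J2" by (rule probPM)
  show ?thesis
  proof (rule P.integrable_const_bound[where B="2 * real n * c0"])
    show "(\<lambda>y. Psi (merge I1 J2 (S, y))) \<in> borel_measurable (PM J2)"
      using measurable_comp[OF merge_meas[OF S] Psi_meas] by (simp add: comp_def)
    show "AE y in PM J2. norm (Psi (merge I1 J2 (S, y))) \<le> 2 * real n * c0"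
      using AE_ball_PM[of J2, OF finite_atLeastLessThan]
    proof (eventually_elim)
      case (elim y)
      have "\<And>j. j \<in> KK \<Longrightarrow> vnorm m (merge I1 J2 (S, y) j) \<le> 1"
        using elim Sb by (auto simp: merge_def)
      then show ?case using Psi_bound by simp
    qed
  qed
qed

lemma ghost_step:
  assumes S: "S \<in> space (PM I1)" and Sb: "\<forall>i\<in>I1. vnorm m (S i) \<le> 1" and V: "V \<in> HH"
  shows "pop_risk k m D l V - emp_risk k m n l S V \<le> (1 / real n) * (\<integral>y. Psi (merge I1 J2 (S, y)) \<partial>PM J2)"
proof -
  interpret P: prob_space "PM J2" by (rule probPM)
  have n0: "0 < real n" using n1 by simp
  have ci: "\<And>i. i \<in> I1 \<Longrightarrow> integrable (PM J2) (\<lambda>y. f V (y (i+n)))"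
    by (rule comp_integrable[OF _ V]) auto
  have "(\<integral>y. (\<Sum>i<n. f V (y (i+n))) \<partial>PM J2) = (\<Sum>i<n. \<integral>y. f V (y (i+n)) \<partial>PM J2)"
    by (rule Bochner_Integration.integral_sum) (rule ci)
  also have "\<dots> = real n * pop_risk k m D l V"
  proof -
    have "\<And>i. i < n \<Longrightarrow> (\<integral>y. f V (y (i+n)) \<partial>PM J2) = pop_risk k m D l V"
      by (intro comp_integral) auto
    then show ?thesis by simp
  qed
  finally have e1: "(\<integral>y. (\<Sum>i<n. f V (y (i+n))) \<partial>PM J2) = real n * pop_risk k m D l V" .
  have geq: "gap V (merge I1 J2 (S, y)) = (\<Sum>i<n. f V (y (i+n))) - (\<Sum>i<n. f V (S i))" for y
  proof -
    have "(\<Sum>i<n. f V (merge I1 J2 (S, y) (i + n))) = (\<Sum>i<n. f V (y (i+n)))"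
      by (intro sum.cong refl) (simp add: merge_def)
    moreover have "(\<Sum>i<n. f V (merge I1 J2 (S, y) i)) = (\<Sum>i<n. f V (S i))"
      by (intro sum.cong refl) (simp add: merge_def)
    ultimately show ?thesis unfolding gap_def by (simp add: sum_subtractf)
  qed
  have "(\<integral>y. gap V (merge I1 J2 (S, y)) \<partial>PM J2) \<le> (\<integral>y. Psi (merge I1 J2 (S, y)) \<partial>PM J2)"
  proof (rule integral_mono)
    show "integrable (PM J2) (\<lambda>y. gap V (merge I1 J2 (S, y)))"
      unfolding geq using ci by (intro Bochner_Integration.integrable_diff Bochner_Integration.integrable_sum) auto
    show "integrable (PM J2) (\<lambda>y. Psi (merge I1 J2 (S, y)))" by (rule inner_int[OF S Sb])
    show "\<And>y. y \<in> space (PM J2) \<Longrightarrow> gap V (merge I1 J2 (S, y)) \<le> Psi (merge I1 J2 (S, y))"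
      by (rule gap_le_Psi[OF V])
  qed
  moreover have "(\<integral>y. gap V (merge I1 J2 (S, y)) \<partial>PM J2) = real n * pop_risk k m D l V - (\<Sum>i<n. f V (S i))"
    unfolding geq using ci e1 P.prob_space
    by (subst Bochner_Integration.integral_diff) (auto intro!: Bochner_Integration.integrable_sum)
  ultimately have "real n * pop_risk k m D l V - (\<Sum>i<n. f V (S i)) \<le> (\<integral>y. Psi (merge I1 J2 (S, y)) \<partial>PM J2)"
    by simp
  moreover have "emp_risk k m n l S V = (\<Sum>i<n. f V (S i)) / real n" unfolding emp_risk_def by simp
  ultimately show ?thesis using n0 by (simp add: field_simps)
qed

lemma fubini:
  "integral\<^sup>L (PM KK) Psi = (\<integral>S. (\<integral>y. Psi (merge I1 J2 (S, y)) \<partial>PM J2) \<partial>PM I1)"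
proof -
  interpret product_sigma_finite "\<lambda>_. D" by (rule PS)
  show ?thesis by (rule product_integral_fold) (auto intro: Psi_int)
qed

lemma outer_int:
  "integrable (PM I1) (\<lambda>S. \<integral>y. Psi (merge I1 J2 (S, y)) \<partial>PM J2)"
proof -
  interpret PS': product_sigma_finite "\<lambda>_. D" by (rule PS)
  interpret pair_sigma_finite "PM I1" "PM J2"
    unfolding pair_sigma_finite_def by (intro conjI prob_space_imp_sigma_finite probPM)
  have "integrable (distr (PM I1 \<Otimes>\<^sub>M PM J2) (PM KK) (merge I1 J2)) Psi"
    by (subst PS'.distr_merge) (auto intro: Psi_int)
  then have "integrable (PM I1 \<Otimes>\<^sub>M PM J2) (\<lambda>p. Psi (merge I1 J2 p))"
    by (rule integrable_distr[OF measurable_merge])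
  then show ?thesis by (rule integrable_fst')
qed

theorem main:
  assumes Ws: "Wstar \<in> HH"
    and ERM: "\<forall>S\<in>space (sample_dist n D). What S \<in> HH \<and> (\<forall>W\<in>HH. emp_risk k m n l S (What S) \<le> emp_risk k m n l S W)"
  shows "(\<integral>S. pop_risk k m D l (What S) - pop_risk k m D l Wstar \<partial>(sample_dist n D))
          \<le> 4 * G * sqrt (real k) / sqrt (real n)"
proof -
  have n0: "0 < real n" using n1 by simp
  have sd: "sample_dist n D = PM I1" unfolding sample_dist_def ..
  have rhs0: "0 \<le> 4 * G * sqrt (real k) / sqrt (real n)" using G by simp
  interpret P1: prob_space "PM I1" by (rule probPM)
  define Phi where "Phi = (\<lambda>S. \<integral>y. Psi (merge I1 J2 (S, y)) \<partial>PM J2)"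
  define R where "R = (\<lambda>S. (1 / real n) * Phi S + (emp_risk k m n l S Wstar - pop_risk k m D l Wstar))"
  have ciW: "\<And>i. i \<in> I1 \<Longrightarrow> integrable (PM I1) (\<lambda>S. f Wstar (S i))"
    by (rule comp_integrable[OF _ Ws]) auto
  have emp_int: "integrable (PM I1) (\<lambda>S. emp_risk k m n l S Wstar)"
    unfolding emp_risk_def using ciW by (intro integrable_divide_zero Bochner_Integration.integrable_sum) auto
  have emp_eq: "(\<integral>S. emp_risk k m n l S Wstar \<partial>PM I1) = pop_risk k m D l Wstar"
  proof -
    have "(\<integral>S. emp_risk k m n l S Wstar \<partial>PM I1) = (\<Sum>i<n. \<integral>S. f Wstar (S i) \<partial>PM I1) / real n"
      unfolding emp_risk_def using ciW by (simp add: Bochner_Integration.integral_sum)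
    also have "\<dots> = pop_risk k m D l Wstar"
    proof -
      have "\<And>i. i < n \<Longrightarrow> (\<integral>S. f Wstar (S i) \<partial>PM I1) = pop_risk k m D l Wstar"
        by (intro comp_integral) auto
      then show ?thesis using n0 by simp
    qed
    finally show ?thesis .
  qed
  have R_int: "integrable (PM I1) R"
    unfolding R_def Phi_def using outer_int emp_int by auto
  have R_eq: "integral\<^sup>L (PM I1) R = (1 / real n) * integral\<^sup>L (PM KK) Psi"
  proof -
    have "integral\<^sup>L (PM I1) R = (1 / real n) * integral\<^sup>L (PM I1) Phi
        + ((\<integral>S. emp_risk k m n l S Wstar \<partial>PM I1) - pop_risk k m D l Wstar)"
      unfolding R_def Phi_def using outer_int emp_int P1.prob_space by simp
    then show ?thesis unfolding emp_eq fubini Phi_def by simp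
  qed
  show ?thesis
  proof (cases "integrable (PM I1) (\<lambda>S. pop_risk k m D l (What S) - pop_risk k m D l Wstar)")
    case True
    have "(\<integral>S. pop_risk k m D l (What S) - pop_risk k m D l Wstar \<partial>PM I1) \<le> integral\<^sup>L (PM I1) R"
    proof (rule integral_mono_AE[OF True R_int])
      show "AE S in PM I1. pop_risk k m D l (What S) - pop_risk k m D l Wstar \<le> R S"
        using AE_ball_PM[of I1, OF finite_lessThan] AE_space
      proof (eventually_elim)
        case (elim S)
        have S: "S \<in> space (sample_dist n D)" using elim sd by simp
        have WS: "What S \<in> HH" and erm: "emp_risk k m n l S (What S) \<le> emp_risk k m n l S Wstar"
          using ERM S Ws by auto
        have "pop_risk k m D l (What S) - emp_risk k m n l S (What S) \<le> (1 / real n) * Phi S"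
          unfolding Phi_def using elim by (intro ghost_step WS) auto
        then show ?case unfolding R_def using erm by simp
      qed
    qed
    also have "\<dots> = (1 / real n) * integral\<^sup>L (PM KK) Psi" by (rule R_eq)
    also have "\<dots> \<le> (1 / real n) * (4 * G * sqrt (real k * real n))"
      using n0 ghost_bound by (intro mult_left_mono) auto
    also have "\<dots> = 4 * G * sqrt (real k) / sqrt (real n)"
    proof -
      have sn: "sqrt (real n) * sqrt (real n) = real n" using n0 by simp
      have "sqrt (real n) > 0" using n0 by simp
      then show ?thesis using sn by (simp add: real_sqrt_mult field_simps)
    qed
    finally show ?thesis unfolding sd .
  next
    case False
    then show ?thesis unfolding sd using rhs0 by (simp add: not_integrable_integral_eq)
  qed
qed

end

theorem theorem5:
  fixes G :: real
  assumes "0 \<le> G"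
  shows "\<exists>C::real. \<forall>(k::nat) (n::nat) (m::nat) W0 l D What Wstar.
    (1 \<le> n \<and> is_matrix k m W0 \<and> convex_loss k l \<and> lipschitz_loss k G l \<and>
     unit_ball_dist m D \<and>
     Wstar \<in> hyp_set k m W0 \<and> (\<forall>W\<in>hyp_set k m W0. pop_risk k m D l Wstar \<le> pop_risk k m D l W) \<and>
     (\<forall>S\<in>space (sample_dist n D). What S \<in> hyp_set k m W0 \<and>
        (\<forall>W\<in>hyp_set k m W0. emp_risk k m n l S (What S) \<le> emp_risk k m n l S W)))
    \<longrightarrow> (\<integral>S. pop_risk k m D l (What S) - pop_risk k m D l Wstar \<partial>(sample_dist n D))
          \<le> C * sqrt (real k) / sqrt (real n)"
proof (intro exI[of _ "4 * G"] allI impI)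
  fix k n m :: nat and W0 l D What Wstar
  assume A: "1 \<le> n \<and> is_matrix k m W0 \<and> convex_loss k l \<and> lipschitz_loss k G l \<and>
     unit_ball_dist m D \<and>
     Wstar \<in> hyp_set k m W0 \<and> (\<forall>W\<in>hyp_set k m W0. pop_risk k m D l Wstar \<le> pop_risk k m D l W) \<and>
     (\<forall>S\<in>space (sample_dist n D). What S \<in> hyp_set k m W0 \<and>
        (\<forall>W\<in>hyp_set k m W0. emp_risk k m n l S (What S) \<le> emp_risk k m n l S W))"
  interpret erm k n m W0 l D G
    using A assms by unfold_locales auto
  show "(\<integral>S. pop_risk k m D l (What S) - pop_risk k m D l Wstar \<partial>(sample_dist n D))
          \<le> 4 * G * sqrt (real k) / sqrt (real n)"
    using A by (intro main) auto
qed



end
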